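(* Let $\varepsilon\in(0,1/2]$, $m\ge2$ and $B\ge1$. There is a family of LP instances (hence SDP instances) with $R,r=O(1)$ in the quantum state input model with normalization bound $B$ such that any quantum algorithm which for every instance of the family outputs an $\varepsilon$-approximation of the optimal value with probability at least $2/3$ must make $\Omega(\sqrt{m}\,B/\varepsilon)$ queries to the input oracles.
   Context: SDP: maximize $\mathrm{Tr}(CX)$ s.t. $\mathrm{Tr}(A_jX)\le b_j$ ($j\in[m]$), $X\succeq0$, with $n\times n$ Hermitian $C,A_j$ of operator norm at most $1$; $R$ bounds the trace of an optimal primal solution, $r$ bounds $\|y\|_1$ of an optimal dual solution. An LP is the case where all matrices are diagonal. Quantum state input model: each $A_j=\mu_j^+\varrho_j^+-\mu_j^-\varrho_j^-+\mu_j^II$ with subnormalized density operators $\varrho_j^\pm$ (psd, trace $\le1$), $\mu_j^\pm\ge0$, $\mu_j^I\in\mathbb{R}$; an oracle $O_\mu$ returns $\mu_j^+,\mu_j^-,\mu_j^I$; an oracle $O_{|\cdot\rangle}|j\rangle|\pm\rangle|0\rangle=|j\rangle|\pm\rangle|\psi_j^\pm\rangle$ prepares purifications of $\varrho_j^\pm$ (pure states on three registers such that tracing out the third and projecting the second onto $|0\rangle$ yields $\varrho_j^\pm$); and $\mu_j^++\mu_j^-+|\mu_j^I|\le B$ for all $j$. Controlled versions and inverses of oracles may be used. *)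

theory Defs
  imports Complex_Main "Jordan_Normal_Form.Matrix"
begin

definition adj :: "complex mat \<Rightarrow> complex mat" where
  "adj A = mat (dim_col A) (dim_row A) (\<lambda>(i,j). cnj (A $$ (j,i)))"

definition mtrace :: "complex mat \<Rightarrow> complex" where
  "mtrace A = (\<Sum>i<dim_row A. A $$ (i,i))"

definition hermitian :: "nat \<Rightarrow> complex mat \<Rightarrow> bool" where
  "hermitian n A \<longleftrightarrow> A \<in> carrier_mat n n \<and> adj A = A"

definition cinner :: "complex vec \<Rightarrow> complex vec \<Rightarrow> complex" where
  "cinner v w = (\<Sum>i<dim_vec v. cnj (v $ i) * w $ i)"

definition vnorm2 :: "complex vec \<Rightarrow> real" where
  "vnorm2 v = (\<Sum>i<dim_vec v. (cmod (v $ i))\<^sup>2)"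

definition psd :: "nat \<Rightarrow> complex mat \<Rightarrow> bool" where
  "psd n A \<longleftrightarrow> hermitian n A \<and>
     (\<forall>v\<in>carrier_vec n. Im (cinner v (A *\<^sub>v v)) = 0 \<and> Re (cinner v (A *\<^sub>v v)) \<ge> 0)"

definition opnorm_le1 :: "nat \<Rightarrow> complex mat \<Rightarrow> bool" where
  "opnorm_le1 n A \<longleftrightarrow> A \<in> carrier_mat n n \<and>
     (\<forall>v\<in>carrier_vec n. vnorm2 (A *\<^sub>v v) \<le> vnorm2 v)"

definition unitary :: "nat \<Rightarrow> complex mat \<Rightarrow> bool" where
  "unitary d U \<longleftrightarrow> U \<in> carrier_mat d d \<and> adj U * U = 1\<^sub>m d \<and> U * adj U = 1\<^sub>m d"

text \<open>Kronecker (tensor) product; the first factor is the most significant index\<close>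
definition kron :: "complex mat \<Rightarrow> complex mat \<Rightarrow> complex mat" where
  "kron A B = mat (dim_row A * dim_row B) (dim_col A * dim_col B)
     (\<lambda>(i,j). A $$ (i div dim_row B, j div dim_col B) * B $$ (i mod dim_row B, j mod dim_col B))"

definition vkron :: "complex vec \<Rightarrow> complex vec \<Rightarrow> complex vec" where
  "vkron v w = vec (dim_vec v * dim_vec w) (\<lambda>i. v $ (i div dim_vec w) * w $ (i mod dim_vec w))"

definition primal_feasible ::
  "nat \<Rightarrow> nat \<Rightarrow> complex mat \<Rightarrow> (nat \<Rightarrow> complex mat) \<Rightarrow> (nat \<Rightarrow> real) \<Rightarrow> complex mat \<Rightarrow> bool" where
  "primal_feasible n m C A b X \<longleftrightarrow> psd n X \<and> (\<forall>j<m. Re (mtrace (A j * X)) \<le> b j)"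

definition primal_obj :: "complex mat \<Rightarrow> complex mat \<Rightarrow> real" where
  "primal_obj C X = Re (mtrace (C * X))"

definition primal_optimal ::
  "nat \<Rightarrow> nat \<Rightarrow> complex mat \<Rightarrow> (nat \<Rightarrow> complex mat) \<Rightarrow> (nat \<Rightarrow> real) \<Rightarrow> complex mat \<Rightarrow> bool" where
  "primal_optimal n m C A b X \<longleftrightarrow> primal_feasible n m C A b X \<and>
     (\<forall>X'. primal_feasible n m C A b X' \<longrightarrow> primal_obj C X' \<le> primal_obj C X)"

definition opt_val ::
  "nat \<Rightarrow> nat \<Rightarrow> complex mat \<Rightarrow> (nat \<Rightarrow> complex mat) \<Rightarrow> (nat \<Rightarrow> real) \<Rightarrow> real" where
  "opt_val n m C A b = Sup (primal_obj C ` {X. primal_feasible n m C A b X})"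

definition dual_feasible ::
  "nat \<Rightarrow> nat \<Rightarrow> complex mat \<Rightarrow> (nat \<Rightarrow> complex mat) \<Rightarrow> (nat \<Rightarrow> real) \<Rightarrow> bool" where
  "dual_feasible n m C A y \<longleftrightarrow> (\<forall>j<m. y j \<ge> 0) \<and>
     psd n (mat n n (\<lambda>(r,c). \<Sum>j<m. complex_of_real (y j) * A j $$ (r,c)) - C)"

definition dual_optimal ::
  "nat \<Rightarrow> nat \<Rightarrow> complex mat \<Rightarrow> (nat \<Rightarrow> complex mat) \<Rightarrow> (nat \<Rightarrow> real) \<Rightarrow> (nat \<Rightarrow> real) \<Rightarrow> bool" where
  "dual_optimal n m C A b y \<longleftrightarrow> dual_feasible n m C A y \<and>
     (\<forall>y'. dual_feasible n m C A y' \<longrightarrow> (\<Sum>j<m. b j * y j) \<le> (\<Sum>j<m. b j * y' j))"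

text \<open>An instance of the input oracles. Sign index s: 0 stands for +, 1 for -.
  The purification psi j s lives on C^n (x) C^a (x) C^e (system, flag, environment).\<close>
record qs_instance =
  psi :: "nat \<Rightarrow> nat \<Rightarrow> complex vec"
  mup :: "nat \<Rightarrow> real"
  mum :: "nat \<Rightarrow> real"
  muI :: "nat \<Rightarrow> real"
  Opsi :: "complex mat"

text \<open>density operator obtained by tracing out the third register and projecting the
  second register onto |0>\<close>
definition rho_of :: "nat \<Rightarrow> nat \<Rightarrow> nat \<Rightarrow> complex vec \<Rightarrow> complex mat" where
  "rho_of n a e v = mat n n (\<lambda>(i,k).
     (\<Sum>t<e. v $ ((i * a + 0) * e + t) * cnj (v $ ((k * a + 0) * e + t))))"

definition A_of :: "nat \<Rightarrow> nat \<Rightarrow> nat \<Rightarrow> qs_instance \<Rightarrow> nat \<Rightarrow> complex mat" where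
  "A_of n a e I j =
     complex_of_real (mup I j) \<cdot>\<^sub>m rho_of n a e (psi I j 0)
   - complex_of_real (mum I j) \<cdot>\<^sub>m rho_of n a e (psi I j 1)
   + complex_of_real (muI I j) \<cdot>\<^sub>m 1\<^sub>m n"

text \<open>O_mu: classical oracle |j>|z> -> |j>|z + enc(mu_j) mod L> on C^m (x) C^L\<close>
definition Omu :: "nat \<Rightarrow> nat \<Rightarrow> (real \<times> real \<times> real \<Rightarrow> nat) \<Rightarrow> qs_instance \<Rightarrow> complex mat" where
  "Omu m L enc I = mat (m * L) (m * L) (\<lambda>(r,c).
     if r div L = c div L \<and>
        r mod L = (c mod L + enc (mup I (c div L), mum I (c div L), muI I (c div L))) mod L
     then 1 else 0)"

definition valid_instance :: "nat \<Rightarrow> nat \<Rightarrow> nat \<Rightarrow> nat \<Rightarrow> real \<Rightarrow> qs_instance \<Rightarrow> bool" where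
  "valid_instance m n a e B I \<longleftrightarrow>
     (\<forall>j<m. \<forall>s<2. psi I j s \<in> carrier_vec (n * a * e) \<and> vnorm2 (psi I j s) = 1) \<and>
     (\<forall>j<m. mup I j \<ge> 0 \<and> mum I j \<ge> 0 \<and> mup I j + mum I j + \<bar>muI I j\<bar> \<le> B) \<and>
     unitary (m * 2 * (n * a * e)) (Opsi I) \<and>
     (\<forall>j<m. \<forall>s<2. Opsi I *\<^sub>v unit_vec (m * 2 * (n * a * e)) ((j * 2 + s) * (n * a * e))
          = vkron (vkron (unit_vec m j) (unit_vec 2 s)) (psi I j s))"

text \<open>Query kinds: which oracle (False = O_mu, True = O_psi), inverse?, controlled?\<close>
type_synonym qkind = "bool \<times> bool \<times> bool"

text \<open>Work space: C^2 (control) (x) C^(dmu) (x) C^(dpsi) (x) C^k (workspace).\<close>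
definition embed_query :: "nat \<Rightarrow> complex mat \<Rightarrow> complex mat \<Rightarrow> qkind \<Rightarrow> complex mat" where
  "embed_query k Om Op q = (case q of (which, isinv, ctrl) \<Rightarrow>
     let dm = dim_row Om; dp = dim_row Op;
         O0 = (if which then Op else Om);
         O1 = (if isinv then adj O0 else O0);
         E = (if which then kron (1\<^sub>m dm) (kron O1 (1\<^sub>m k)) else kron O1 (1\<^sub>m (dp * k)));
         P0 = mat 2 2 (\<lambda>(i,j). if i = 0 \<and> j = 0 then 1 else 0);
         P1 = mat 2 2 (\<lambda>(i,j). if i = 1 \<and> j = 1 then 1 else 0)
     in if ctrl then kron P0 (1\<^sub>m (dm * dp * k)) + kron P1 E else kron (1\<^sub>m 2) E)"

fun alg_state :: "nat \<Rightarrow> nat \<Rightarrow> (nat \<Rightarrow> complex mat) \<Rightarrow> (nat \<Rightarrow> qkind)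
                   \<Rightarrow> complex mat \<Rightarrow> complex mat \<Rightarrow> nat \<Rightarrow> complex vec" where
  "alg_state D k U q Om Op 0 = U 0 *\<^sub>v unit_vec D 0"
| "alg_state D k U q Om Op (Suc t) =
     U (Suc t) *\<^sub>v (embed_query k Om Op (q (Suc t)) *\<^sub>v alg_state D k U q Om Op t)"

definition success_prob :: "nat \<Rightarrow> nat \<Rightarrow> (nat \<Rightarrow> complex mat) \<Rightarrow> (nat \<Rightarrow> qkind)
     \<Rightarrow> (nat \<Rightarrow> real) \<Rightarrow> nat \<Rightarrow> complex mat \<Rightarrow> complex mat \<Rightarrow> real \<Rightarrow> real \<Rightarrow> real" where
  "success_prob D k U q out T Om Op target eps =
     (\<Sum>i\<in>{i. i < D \<and> \<bar>out i - target\<bar> \<le> eps}. (cmod (alg_state D k U q Om Op T $ i))\<^sup>2)"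

end

theory Submission
  imports Defs "HOL-Analysis.L2_Norm"
begin

definition nv :: "complex vec \<Rightarrow> real" where "nv v = sqrt (vnorm2 v)"

definition nS :: "nat set \<Rightarrow> complex vec \<Rightarrow> real" where
  "nS S v = (\<Sum>i\<in>{i. i < dim_vec v \<and> i \<in> S}. (cmod (v $ i))\<^sup>2)"

definition bnd :: "nat \<Rightarrow> complex mat \<Rightarrow> real \<Rightarrow> nat set \<Rightarrow> bool" where
  "bnd d M \<alpha> S \<longleftrightarrow> M \<in> carrier_mat d d \<and> \<alpha> \<ge> 0 \<and>
     (\<forall>v\<in>carrier_vec d. vnorm2 (M *\<^sub>v v) \<le> \<alpha>\<^sup>2 * nS S v)"

lemma mv_sum: "A \<in> carrier_mat nr nc \<Longrightarrow> v \<in> carrier_vec nc \<Longrightarrow> i < nr \<Longrightarrow>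
   (A *\<^sub>v v) $ i = (\<Sum>c<nc. A $$ (i,c) * v $ c)"
  by (auto simp: scalar_prod_def row_def atLeast0LessThan intro!: sum.cong)

lemma vnorm2_nonneg: "vnorm2 v \<ge> 0"
  unfolding vnorm2_def by (auto intro: sum_nonneg)

lemma nS_nonneg: "nS S v \<ge> 0"
  unfolding nS_def by (auto intro: sum_nonneg)

lemma nS_le: "nS S v \<le> vnorm2 v"
  unfolding nS_def vnorm2_def by (rule sum_mono2) auto

lemma nS_UNIV: "nS UNIV v = vnorm2 v"
  unfolding nS_def vnorm2_def by (rule sum.cong) auto

lemma nS_mono: "S \<subseteq> T \<Longrightarrow> nS S v \<le> nS T v"
  unfolding nS_def by (rule sum_mono2) auto

lemma nv_L2: "nv v = L2_set (\<lambda>i. cmod (v $ i)) {..<dim_vec v}"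
  unfolding nv_def vnorm2_def L2_set_def by simp

lemma nv_nonneg: "nv v \<ge> 0" unfolding nv_def by (simp add: vnorm2_nonneg)

lemma nv_add: assumes "dim_vec w = dim_vec v" shows "nv (v + w) \<le> nv v + nv w"
proof -
  have "nv (v + w) = L2_set (\<lambda>i. cmod (v $ i + w $ i)) {..<dim_vec v}"
    unfolding nv_L2 using assms by (intro L2_set_cong) auto
  also have "\<dots> \<le> L2_set (\<lambda>i. cmod (v $ i) + cmod (w $ i)) {..<dim_vec v}"
    by (rule L2_set_mono) (auto intro: norm_triangle_ineq)
  also have "\<dots> \<le> nv v + nv w"
    unfolding nv_L2 using assms by (simp add: L2_set_triangle_ineq)
  finally show ?thesis .
qed

lemma vnorm2_cinner: "vnorm2 v = Re (cinner v v)"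
proof -
  have "(cmod z)\<^sup>2 = Re (cnj z * z)" for z :: complex
    using cmod_power2[of z] by (simp add: power2_eq_square)
  then show ?thesis unfolding vnorm2_def cinner_def by (simp add: Re_sum)
qed

lemma cinner_adj:
  assumes A: "A \<in> carrier_mat d d" and v: "v \<in> carrier_vec d" and w: "w \<in> carrier_vec d"
  shows "cinner (A *\<^sub>v v) w = cinner v (adj A *\<^sub>v w)"
proof -
  have adjA: "adj A \<in> carrier_mat d d" using A by (auto simp: adj_def)
  have "cinner (A *\<^sub>v v) w = (\<Sum>i<d. cnj (\<Sum>c<d. A $$ (i,c) * v $ c) * w $ i)"
    unfolding cinner_def using A v by (auto intro!: sum.cong simp: mv_sum[OF A v] simp del: index_mult_mat_vec)
  also have "\<dots> = (\<Sum>i<d. \<Sum>c<d. cnj (v $ c) * (cnj (A $$ (i,c)) * w $ i))"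
    by (simp add: sum_distrib_right sum_distrib_left mult_ac)
  also have "\<dots> = (\<Sum>c<d. \<Sum>i<d. cnj (v $ c) * (cnj (A $$ (i,c)) * w $ i))"
    by (rule sum.swap)
  also have "\<dots> = (\<Sum>c<d. cnj (v $ c) * (adj A *\<^sub>v w) $ c)"
    using A adjA by (intro sum.cong refl) (subst mv_sum[OF adjA w]; simp add: sum_distrib_left adj_def)
  also have "\<dots> = cinner v (adj A *\<^sub>v w)" unfolding cinner_def using v by simp
  finally show ?thesis .
qed

lemma unitary_norm:
  assumes U: "unitary d U" and v: "v \<in> carrier_vec d"
  shows "vnorm2 (U *\<^sub>v v) = vnorm2 v"
proof -
  have UC: "U \<in> carrier_mat d d" and UU: "adj U * U = 1\<^sub>m d" using U unfolding unitary_def by auto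
  have "cinner (U *\<^sub>v v) (U *\<^sub>v v) = cinner v (adj U *\<^sub>v (U *\<^sub>v v))"
    using UC v by (intro cinner_adj) auto
  also have "adj U *\<^sub>v (U *\<^sub>v v) = (adj U * U) *\<^sub>v v"
    using UC v by (subst assoc_mult_mat_vec) (auto simp: adj_def)
  also have "\<dots> = v" using UU v by simp
  finally show ?thesis by (simp add: vnorm2_cinner)
qed

lemma unitary_bnd: "unitary d U \<Longrightarrow> bnd d U 1 UNIV"
  unfolding bnd_def by (auto simp: unitary_norm nS_UNIV unitary_def)

lemma unitary_adj: "unitary d U \<Longrightarrow> unitary d (adj U)"
proof -
  assume U: "unitary d U"
  have "adj (adj U) = U" using U unfolding unitary_def adj_def by (auto intro!: eq_matI)
  then show ?thesis using U unfolding unitary_def by (auto simp: adj_def)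
qed


lemma sum_shift_add: "(\<Sum>i<n+b. f i) = (\<Sum>i<n. f i) + (\<Sum>i<b. f (n+i))" for f :: "nat \<Rightarrow> 'a::comm_monoid_add"
  by (induction b) (auto simp: add_ac)

lemma sum_pair: "(\<Sum>i<a*b. f i) = (\<Sum>i1<a. \<Sum>i2<b. f (i1*b+i2))" for f :: "nat \<Rightarrow> 'a::comm_monoid_add"
proof (induction a)
  case 0 then show ?case by simp
next
  case (Suc a)
  have "(\<Sum>i<Suc a * b. f i) = (\<Sum>i<a*b + b. f i)" by (simp add: add.commute)
  also have "\<dots> = (\<Sum>i<a*b. f i) + (\<Sum>i<b. f (a*b+i))" by (rule sum_shift_add)
  finally show ?case using Suc by simp
qed

lemma nS_alt: "nS S v = (\<Sum>i<dim_vec v. if i \<in> S then (cmod (v $ i))\<^sup>2 else 0)"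
  unfolding nS_def by (rule sum.mono_neutral_cong_left) auto

lemma vnorm2_alt: "vnorm2 v = (\<Sum>i<dim_vec v. (cmod (v $ i))\<^sup>2)"
  unfolding vnorm2_def by simp

definition blk :: "nat \<Rightarrow> complex vec \<Rightarrow> nat \<Rightarrow> complex vec" where
  "blk b v c1 = vec b (\<lambda>c2. v $ (c1*b+c2))"

lemma blk_carrier[simp]: "blk b v c1 \<in> carrier_vec b" "dim_vec (blk b v c1) = b"
  unfolding blk_def by auto

lemma blk_index[simp]: "i < b \<Longrightarrow> blk b v c1 $ i = v $ (c1*b+i)"
  unfolding blk_def by auto

lemma kron_carrier[simp]: "kron A B \<in> carrier_mat (dim_row A * dim_row B) (dim_col A * dim_col B)"
  unfolding kron_def by auto

lemma kron_carrier2: "A \<in> carrier_mat a a \<Longrightarrow> B \<in> carrier_mat b b \<Longrightarrow> kron A B \<in> carrier_mat (a*b) (a*b)"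
  unfolding kron_def by auto

lemma divmod_small: "i2 < b \<Longrightarrow> (i1*b+i2) div b = i1" "i2 < (b::nat) \<Longrightarrow> (i1*b+i2) mod b = i2"
  by auto

lemma kron_index:
  assumes "A \<in> carrier_mat a a" "B \<in> carrier_mat b b" "i1 < a" "i2 < b" "c1 < a" "c2 < b"
  shows "kron A B $$ (i1*b+i2, c1*b+c2) = A $$ (i1,c1) * B $$ (i2,c2)"
proof -
  have "i1*b+i2 < a*b" "c1*b+c2 < a*b" using assms
    by (metis add.commute mult.commute nat_mult_less_cancel_disj not_less less_imp_le_nat
         linorder_not_le mult_Suc_right trans_less_add2 add_less_mono1 mult_le_mono1 less_le_trans
         Suc_leI nat_add_left_cancel_less order.strict_trans2)+
  then show ?thesis using assms unfolding kron_def by (simp add: divmod_small)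
qed

lemma pair_lt: "i1 < a \<Longrightarrow> i2 < b \<Longrightarrow> i1*b+i2 < a*(b::nat)"
proof -
  assume "i1 < a" "i2 < b"
  then have "i1*b+i2 < i1*b+b" by simp
  also have "\<dots> = Suc i1 * b" by simp
  also have "\<dots> \<le> a*b" using \<open>i1<a\<close> by (intro mult_le_mono1) simp
  finally show ?thesis .
qed

lemma KF:
  assumes A: "A \<in> carrier_mat a a" and B: "B \<in> carrier_mat b b" and v: "v \<in> carrier_vec (a*b)"
    and i: "i1 < a" "i2 < b"
  shows "(kron A B *\<^sub>v v) $ (i1*b+i2) = (\<Sum>c1<a. A $$ (i1,c1) * (B *\<^sub>v blk b v c1) $ i2)"
proof -
  have K: "kron A B \<in> carrier_mat (a*b) (a*b)" by (rule kron_carrier2[OF A B])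
  have "(kron A B *\<^sub>v v) $ (i1*b+i2) = (\<Sum>c<a*b. kron A B $$ (i1*b+i2, c) * v $ c)"
    by (rule mv_sum[OF K v pair_lt[OF i]])
  also have "\<dots> = (\<Sum>c1<a. \<Sum>c2<b. kron A B $$ (i1*b+i2, c1*b+c2) * v $ (c1*b+c2))"
    by (rule sum_pair)
  also have "\<dots> = (\<Sum>c1<a. \<Sum>c2<b. A $$ (i1,c1) * (B $$ (i2,c2) * v $ (c1*b+c2)))"
    using A B i by (intro sum.cong refl) (simp add: kron_index)
  also have "\<dots> = (\<Sum>c1<a. A $$ (i1,c1) * (B *\<^sub>v blk b v c1) $ i2)"
    using B i by (intro sum.cong refl) (simp add: mv_sum[OF B blk_carrier(1) i(2)] sum_distrib_left del: index_mult_mat_vec)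
  finally show ?thesis .
qed

lemma vnorm2_pair: "dim_vec w = a*b \<Longrightarrow> vnorm2 w = (\<Sum>i1<a. \<Sum>i2<b. (cmod (w $ (i1*b+i2)))\<^sup>2)"
  unfolding vnorm2_alt by (simp add: sum_pair)

lemma nS_pair: "dim_vec w = a*b \<Longrightarrow> nS {i. i div b \<in> S \<and> i mod b \<in> T} w =
   (\<Sum>i1<a. if i1 \<in> S then nS T (blk b w i1) else 0)"
  unfolding nS_alt by (auto simp: sum_pair divmod_small intro!: sum.cong sum.neutral)

lemma kron_bnd:
  assumes A: "bnd a A \<alpha> S" and B: "bnd b B \<beta> T"
  shows "bnd (a*b) (kron A B) (\<alpha>*\<beta>) {i. i div b \<in> S \<and> i mod b \<in> T}"
proof -
  have AC: "A \<in> carrier_mat a a" and al: "\<alpha> \<ge> 0" and Ab: "\<And>v. v \<in> carrier_vec a \<Longrightarrow> vnorm2 (A *\<^sub>v v) \<le> \<alpha>\<^sup>2 * nS S v"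
    using A unfolding bnd_def by auto
  have BC: "B \<in> carrier_mat b b" and be: "\<beta> \<ge> 0" and Bb: "\<And>v. v \<in> carrier_vec b \<Longrightarrow> vnorm2 (B *\<^sub>v v) \<le> \<beta>\<^sup>2 * nS T v"
    using B unfolding bnd_def by auto
  have K: "kron A B \<in> carrier_mat (a*b) (a*b)" by (rule kron_carrier2[OF AC BC])
  show ?thesis unfolding bnd_def
  proof (intro conjI ballI K)
    show "\<alpha>*\<beta> \<ge> 0" using al be by simp
    fix v :: "complex vec" assume v: "v \<in> carrier_vec (a*b)"
    define z where "z i2 = vec a (\<lambda>c1. (B *\<^sub>v blk b v c1) $ i2)" for i2
    have zc: "z i2 \<in> carrier_vec a" for i2 unfolding z_def by simp
    have wz: "(kron A B *\<^sub>v v) $ (i1*b+i2) = (A *\<^sub>v z i2) $ i1" if "i1 < a" "i2 < b" for i1 i2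
    proof -
      have "(A *\<^sub>v z i2) $ i1 = (\<Sum>c1<a. A $$ (i1,c1) * z i2 $ c1)" by (rule mv_sum[OF AC zc that(1)])
      then show ?thesis using that by (simp add: KF[OF AC BC v] z_def)
    qed
    have "vnorm2 (kron A B *\<^sub>v v) = (\<Sum>i1<a. \<Sum>i2<b. (cmod ((kron A B *\<^sub>v v) $ (i1*b+i2)))\<^sup>2)"
      using K by (intro vnorm2_pair) simp
    also have "\<dots> = (\<Sum>i2<b. \<Sum>i1<a. (cmod ((A *\<^sub>v z i2) $ i1))\<^sup>2)"
      by (subst sum.swap) (simp add: wz)
    also have "\<dots> = (\<Sum>i2<b. vnorm2 (A *\<^sub>v z i2))"
      using AC by (intro sum.cong refl) (simp add: vnorm2_alt)
    also have "\<dots> \<le> (\<Sum>i2<b. \<alpha>\<^sup>2 * nS S (z i2))"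
      by (intro sum_mono Ab zc)
    also have "\<dots> = \<alpha>\<^sup>2 * (\<Sum>i2<b. \<Sum>c1<a. if c1 \<in> S then (cmod ((B *\<^sub>v blk b v c1) $ i2))\<^sup>2 else 0)"
      by (auto simp: nS_alt sum_distrib_left z_def intro!: sum.cong)
    also have "(\<Sum>i2<b. \<Sum>c1<a. if c1 \<in> S then (cmod ((B *\<^sub>v blk b v c1) $ i2))\<^sup>2 else 0)
        = (\<Sum>c1<a. if c1 \<in> S then vnorm2 (B *\<^sub>v blk b v c1) else 0)"
      using BC by (subst sum.swap) (auto intro!: sum.cong simp: vnorm2_alt)
    also have "\<dots> \<le> (\<Sum>c1<a. if c1 \<in> S then \<beta>\<^sup>2 * nS T (blk b v c1) else 0)"
      by (intro sum_mono) (auto intro: Bb)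
    also have "\<dots> = \<beta>\<^sup>2 * nS {i. i div b \<in> S \<and> i mod b \<in> T} v"
      using v by (subst nS_pair[of v a b]) (auto simp: sum_distrib_left intro!: sum.cong)
    finally show "vnorm2 (kron A B *\<^sub>v v) \<le> (\<alpha>*\<beta>)\<^sup>2 * nS {i. i div b \<in> S \<and> i mod b \<in> T} v"
      using al by (simp add: power_mult_distrib mult_ac mult_right_mono)
  qed
qed


definition P0m :: "complex mat" where "P0m = mat 2 2 (\<lambda>(i,j). if i = 0 \<and> j = 0 then 1 else 0)"
definition P1m :: "complex mat" where "P1m = mat 2 2 (\<lambda>(i,j). if i = 1 \<and> j = 1 then 1 else 0)"

lemma P0m_carrier[simp]: "P0m \<in> carrier_mat 2 2" and P1m_carrier[simp]: "P1m \<in> carrier_mat 2 2"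
  unfolding P0m_def P1m_def by auto

lemma sum_lt2: "(\<Sum>c<2::nat. f c) = f 0 + f 1" for f :: "nat \<Rightarrow> 'a::comm_monoid_add"
  by (simp add: numeral_2_eq_2)

lemma ctrl_blk:
  assumes X: "X \<in> carrier_mat N N" and Y: "Y \<in> carrier_mat N N" and v: "v \<in> carrier_vec (2*N)"
  shows "blk N ((kron P0m X + kron P1m Y) *\<^sub>v v) 0 = X *\<^sub>v blk N v 0"
    and "blk N ((kron P0m X + kron P1m Y) *\<^sub>v v) 1 = Y *\<^sub>v blk N v 1"
proof -
  have K0: "kron P0m X \<in> carrier_mat (2*N) (2*N)" and K1: "kron P1m Y \<in> carrier_mat (2*N) (2*N)"
    using X Y by (auto intro: kron_carrier2)
  have dist: "(kron P0m X + kron P1m Y) *\<^sub>v v = kron P0m X *\<^sub>v v + kron P1m Y *\<^sub>v v"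
    using K0 K1 v by (rule add_mult_distrib_mat_vec)
  have e: "((kron P0m X + kron P1m Y) *\<^sub>v v) $ (i1*N+i2) =
      (X *\<^sub>v blk N v i1) $ i2 * (if i1 = 0 then 1 else 0) + (Y *\<^sub>v blk N v i1) $ i2 * (if i1 = 1 then 1 else 0)"
    if "i1 < 2" "i2 < N" for i1 i2
  proof -
    have "i1*N+i2 < 2*N" using pair_lt[OF that] .
    then have "((kron P0m X + kron P1m Y) *\<^sub>v v) $ (i1*N+i2) = (kron P0m X *\<^sub>v v) $ (i1*N+i2) + (kron P1m Y *\<^sub>v v) $ (i1*N+i2)"
      unfolding dist using K0 K1 by simp
    also have "\<dots> = (\<Sum>c1<2. P0m $$ (i1,c1) * (X *\<^sub>v blk N v c1) $ i2) + (\<Sum>c1<2. P1m $$ (i1,c1) * (Y *\<^sub>v blk N v c1) $ i2)"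
      using KF[OF P0m_carrier X v that] KF[OF P1m_carrier Y v that] by simp
    finally show ?thesis using that by (simp add: sum_lt2 P0m_def P1m_def less_2_cases_iff)
  qed
  show "blk N ((kron P0m X + kron P1m Y) *\<^sub>v v) 0 = X *\<^sub>v blk N v 0"
    using X by (intro eq_vecI) (auto simp: e[of 0, simplified])
  show "blk N ((kron P0m X + kron P1m Y) *\<^sub>v v) 1 = Y *\<^sub>v blk N v 1"
    using Y e[of 1] by (intro eq_vecI) auto
qed

lemma vnorm2_2blk: "dim_vec w = 2*N \<Longrightarrow> vnorm2 w = vnorm2 (blk N w 0) + vnorm2 (blk N w 1)"
  by (simp add: vnorm2_pair[of w 2 N] sum_lt2) (simp add: vnorm2_alt)

lemma nS_2blk: "dim_vec w = 2*N \<Longrightarrow> nS {i. i mod N \<in> S} w = nS S (blk N w 0) + nS S (blk N w 1)"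
  using nS_pair[of w 2 N UNIV S] by (simp add: sum_lt2)

lemma ctrl_bnd:
  assumes X: "bnd N X \<alpha> S" and Y: "bnd N Y \<alpha> S"
  shows "bnd (2*N) (kron P0m X + kron P1m Y) \<alpha> {i. i mod N \<in> S}"
proof -
  have XC: "X \<in> carrier_mat N N" and YC: "Y \<in> carrier_mat N N" and al: "\<alpha> \<ge> 0"
    using X Y unfolding bnd_def by auto
  have "kron P0m X \<in> carrier_mat (2*N) (2*N)" "kron P1m Y \<in> carrier_mat (2*N) (2*N)"
    using XC YC by (auto intro: kron_carrier2)
  then have K: "kron P0m X + kron P1m Y \<in> carrier_mat (2*N) (2*N)" by (intro add_carrier_mat)
  show ?thesis unfolding bnd_def
  proof (intro conjI ballI K al)
    fix v :: "complex vec" assume v: "v \<in> carrier_vec (2*N)"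
    have "vnorm2 ((kron P0m X + kron P1m Y) *\<^sub>v v) = vnorm2 (X *\<^sub>v blk N v 0) + vnorm2 (Y *\<^sub>v blk N v 1)"
      using K ctrl_blk[OF XC YC v] by (subst vnorm2_2blk[of _ N]) (auto simp: One_nat_def)
    also have "\<dots> \<le> \<alpha>\<^sup>2 * nS S (blk N v 0) + \<alpha>\<^sup>2 * nS S (blk N v 1)"
      using X Y unfolding bnd_def by (intro add_mono) auto
    also have "\<dots> = \<alpha>\<^sup>2 * nS {i. i mod N \<in> S} v"
      using v by (simp add: nS_2blk[of v N] distrib_left)
    finally show "vnorm2 ((kron P0m X + kron P1m Y) *\<^sub>v v) \<le> \<alpha>\<^sup>2 * nS {i. i mod N \<in> S} v" .
  qed
qed

lemma divmod_bounds: "i < a*b \<Longrightarrow> i div b < a \<and> i mod b < (b::nat)"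
  by (cases "b = 0") (auto simp: less_mult_imp_div_less)

lemma kron_minus_right: "A \<in> carrier_mat a a \<Longrightarrow> B \<in> carrier_mat b b \<Longrightarrow> B' \<in> carrier_mat b b \<Longrightarrow>
  kron A B - kron A B' = kron A (B - B')"
  unfolding kron_def by (intro eq_matI) (auto simp: algebra_simps dest!: divmod_bounds)

lemma kron_minus_left: "A \<in> carrier_mat a a \<Longrightarrow> A' \<in> carrier_mat a a \<Longrightarrow> B \<in> carrier_mat b b \<Longrightarrow>
  kron A B - kron A' B = kron (A - A') B"
  unfolding kron_def by (intro eq_matI) (auto simp: algebra_simps dest!: divmod_bounds)

lemma mat_add_minus: "A \<in> carrier_mat n n \<Longrightarrow> B \<in> carrier_mat n n \<Longrightarrow> A' \<in> carrier_mat n n \<Longrightarrow> B' \<in> carrier_mat n n \<Longrightarrow>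
  (A' + B') - (A + B) = (A' - A) + (B' - (B :: complex mat))"
  by (intro eq_matI) auto

lemma ctrl_minus:
  assumes "X \<in> carrier_mat N N" "Y \<in> carrier_mat N N" "X' \<in> carrier_mat N N" "Y' \<in> carrier_mat N N"
  shows "(kron P0m X' + kron P1m Y') - (kron P0m X + kron P1m Y) = kron P0m (X' - X) + kron P1m (Y' - Y)"
proof -
  have c: "kron P0m X \<in> carrier_mat (2*N) (2*N)" "kron P1m Y \<in> carrier_mat (2*N) (2*N)"
     "kron P0m X' \<in> carrier_mat (2*N) (2*N)" "kron P1m Y' \<in> carrier_mat (2*N) (2*N)"
    using assms by (auto intro: kron_carrier2)
  show ?thesis using mat_add_minus[OF c(1,2,3,4)] assms
    by (simp add: kron_minus_right[OF P0m_carrier] kron_minus_right[OF P1m_carrier])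
qed

lemma one_bnd: "bnd n (1\<^sub>m n) 1 UNIV"
  unfolding bnd_def by (auto simp: nS_UNIV)

lemma zero_bnd: "A \<in> carrier_mat n n \<Longrightarrow> \<delta> \<ge> 0 \<Longrightarrow> bnd n (A - A) \<delta> S"
  unfolding bnd_def
proof (intro conjI ballI)
  fix v :: "complex vec" assume A: "A \<in> carrier_mat n n" and d: "\<delta> \<ge> 0" and v: "v \<in> carrier_vec n"
  have "(A - A) *\<^sub>v v = 0\<^sub>v n" using A v by (intro eq_vecI) auto
  then show "vnorm2 ((A - A) *\<^sub>v v) \<le> \<delta>\<^sup>2 * nS S v"
    using d by (simp add: vnorm2_def nS_nonneg)
qed auto

lemma kron_one_one: "kron (1\<^sub>m a) (1\<^sub>m b) = 1\<^sub>m (a*b)"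
proof (intro eq_matI)
  fix i j assume "i < dim_row (1\<^sub>m (a*b))" "j < dim_col (1\<^sub>m (a*b))"
  then have ij: "i < a*b" "j < a*b" by auto
  then have "b > 0" by (cases "b = 0") auto
  have "i div b < a" "j div b < a" using ij by (auto simp: less_mult_imp_div_less)
  then show "kron (1\<^sub>m a) (1\<^sub>m b) $$ (i,j) = 1\<^sub>m (a*b) $$ (i,j)"
    using ij \<open>b>0\<close> unfolding kron_def
    by (auto simp: div_mod_decomp intro: div_mult_mod_eq dest: arg_cong[where f="\<lambda>x. x"])
      (metis div_mult_mod_eq)
qed (auto simp: kron_def)


definition EE :: "nat \<Rightarrow> complex mat \<Rightarrow> complex mat \<Rightarrow> bool \<Rightarrow> bool \<Rightarrow> complex mat" where
  "EE k Om Op w iv = (let O0 = (if w then Op else Om); O1 = (if iv then adj O0 else O0)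
     in if w then kron (1\<^sub>m (dim_row Om)) (kron O1 (1\<^sub>m k)) else kron O1 (1\<^sub>m (dim_row Op * k)))"

lemma kron_one2: "E \<in> carrier_mat n n \<Longrightarrow> kron (1\<^sub>m 2) E = kron P0m E + kron P1m E"
  unfolding kron_def P0m_def P1m_def
  by (intro eq_matI) (auto dest!: divmod_bounds simp: less_2_cases_iff)

lemma adj_carrier: "A \<in> carrier_mat n n \<Longrightarrow> adj A \<in> carrier_mat n n"
  unfolding adj_def by auto

lemma EE_carrier: "Om \<in> carrier_mat dm dm \<Longrightarrow> Op \<in> carrier_mat dp dp \<Longrightarrow> EE k Om Op w iv \<in> carrier_mat (dm*dp*k) (dm*dp*k)"
  unfolding EE_def Let_def
  by (auto simp: adj_def kron_def mult_ac)

lemma eq_form: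
  assumes "Om \<in> carrier_mat dm dm" "Op \<in> carrier_mat dp dp"
  shows "embed_query k Om Op (w,iv,c) =
     kron P0m (if c then 1\<^sub>m (dm*dp*k) else EE k Om Op w iv) + kron P1m (EE k Om Op w iv)"
proof -
  have E: "EE k Om Op w iv \<in> carrier_mat (dm*dp*k) (dm*dp*k)" by (rule EE_carrier[OF assms])
  show ?thesis
    using assms kron_one2[OF E]
    unfolding embed_query_def EE_def Let_def P0m_def P1m_def by (cases c) auto
qed

lemma bnd_cong: "bnd n M \<alpha> S \<Longrightarrow> n = n' \<Longrightarrow> S = S' \<Longrightarrow> \<alpha> = \<alpha>' \<Longrightarrow> bnd n' M \<alpha>' S'"
  by simp

lemma bnd_carrier: "bnd n M \<alpha> S \<Longrightarrow> M \<in> carrier_mat n n" unfolding bnd_def by auto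

lemma EE_bnd:
  assumes U: "unitary dm Om" "unitary dp Op"
  shows "bnd (dm*dp*k) (EE k Om Op w iv) 1 UNIV"
proof -
  have O1: "bnd dm (if iv then adj Om else Om) 1 UNIV" "bnd dp (if iv then adj Op else Op) 1 UNIV"
    using U by (auto intro!: unitary_bnd unitary_adj)
  have "Om \<in> carrier_mat dm dm" using U unfolding unitary_def by auto
  show ?thesis
  proof (cases w)
    case True
    have b: "bnd (dm*(dp*k)) (kron (1\<^sub>m dm) (kron (if iv then adj Op else Op) (1\<^sub>m k))) (1*(1*1))
       {i. i div (dp*k) \<in> UNIV \<and> i mod (dp*k) \<in> {i. i div k \<in> UNIV \<and> i mod k \<in> UNIV}}"
      by (intro kron_bnd one_bnd O1)
    have e: "EE k Om Op w iv = kron (1\<^sub>m dm) (kron (if iv then adj Op else Op) (1\<^sub>m k))"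
      using True \<open>Om \<in> _\<close> unfolding EE_def Let_def by simp
    show ?thesis unfolding e by (rule bnd_cong[OF b]) (auto simp: mult_ac)
  next
    case False
    have b: "bnd (dm*(dp*k)) (kron (if iv then adj Om else Om) (1\<^sub>m (dp*k))) (1*1)
       {i. i div (dp*k) \<in> UNIV \<and> i mod (dp*k) \<in> UNIV}"
      by (intro kron_bnd one_bnd O1)
    have e: "EE k Om Op w iv = kron (if iv then adj Om else Om) (1\<^sub>m (dp*k))"
      using False U unfolding EE_def Let_def unitary_def by auto
    show ?thesis unfolding e by (rule bnd_cong[OF b]) (auto simp: mult_ac)
  qed
qed

lemma Q_bnd:
  assumes U: "unitary dm Om" "unitary dp Op"
  shows "bnd (2*(dm*dp*k)) (embed_query k Om Op q) 1 UNIV"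
proof -
  obtain w iv c where q: "q = (w,iv,c)" by (cases q) auto
  have C: "Om \<in> carrier_mat dm dm" "Op \<in> carrier_mat dp dp" using U unfolding unitary_def by auto
  have "bnd (2*(dm*dp*k)) (kron P0m (if c then 1\<^sub>m (dm*dp*k) else EE k Om Op w iv) + kron P1m (EE k Om Op w iv))
     1 {i. i mod (dm*dp*k) \<in> UNIV}"
    by (intro ctrl_bnd EE_bnd[OF U]) (auto intro: one_bnd EE_bnd[OF U])
  then show ?thesis unfolding q eq_form[OF C] by (elim bnd_cong) auto
qed

lemma Q_diff_bnd:
  assumes U: "unitary dm Om" "unitary dp Op" "unitary dp Op'"
    and D1: "bnd dp (Op' - Op) \<delta> S" and D2: "bnd dp (adj Op' - adj Op) \<delta> S"
  shows "bnd (2*(dm*dp*k)) (embed_query k Om Op' q - embed_query k Om Op q) \<delta>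
           {i. (i mod (dm*dp*k) mod (dp*k)) div k \<in> S}"
proof -
  obtain w iv c where q: "q = (w,iv,c)" by (cases q) auto
  have C: "Om \<in> carrier_mat dm dm" "Op \<in> carrier_mat dp dp" "Op' \<in> carrier_mat dp dp"
    using U unfolding unitary_def by auto
  have dl: "\<delta> \<ge> 0" using D1 unfolding bnd_def by auto
  define S2 where "S2 = {i. (i mod (dp*k)) div k \<in> S}"
  have EEd: "bnd (dm*dp*k) (EE k Om Op' w iv - EE k Om Op w iv) \<delta> S2"
  proof (cases w)
    case True
    define O1 where "O1 = (if iv then adj Op else Op)"
    define O1' where "O1' = (if iv then adj Op' else Op')"
    have O1C: "O1 \<in> carrier_mat dp dp" "O1' \<in> carrier_mat dp dp" using C unfolding O1_def O1'_def
      by (auto simp: adj_carrier)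
    have dd: "bnd dp (O1' - O1) \<delta> S" using D1 D2 unfolding O1_def O1'_def by auto
    have k1: "kron O1' (1\<^sub>m k) \<in> carrier_mat (dp*k) (dp*k)" "kron O1 (1\<^sub>m k) \<in> carrier_mat (dp*k) (dp*k)"
      using O1C by (auto intro: kron_carrier2)
    have "EE k Om Op' w iv = kron (1\<^sub>m dm) (kron O1' (1\<^sub>m k))" "EE k Om Op w iv = kron (1\<^sub>m dm) (kron O1 (1\<^sub>m k))"
      using True C unfolding EE_def Let_def O1_def O1'_def by auto
    then have e: "EE k Om Op' w iv - EE k Om Op w iv = kron (1\<^sub>m dm) (kron (O1' - O1) (1\<^sub>m k))"
      using kron_minus_right[OF one_carrier_mat k1] kron_minus_left[OF O1C(2) O1C(1) one_carrier_mat] by simp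
    have "bnd (dm*(dp*k)) (kron (1\<^sub>m dm) (kron (O1' - O1) (1\<^sub>m k))) (1*(\<delta>*1))
       {i. i div (dp*k) \<in> UNIV \<and> i mod (dp*k) \<in> {i. i div k \<in> S \<and> i mod k \<in> UNIV}}"
      by (intro kron_bnd one_bnd dd)
    then show ?thesis unfolding e S2_def by (elim bnd_cong) (auto simp: mult_ac)
  next
    case False
    then have "EE k Om Op' w iv = EE k Om Op w iv" unfolding EE_def Let_def using C by simp
    then show ?thesis using EE_carrier[OF C(1,2)] dl by (simp add: zero_bnd)
  qed
  have Xd: "bnd (dm*dp*k) ((if c then 1\<^sub>m (dm*dp*k) else EE k Om Op' w iv) - (if c then 1\<^sub>m (dm*dp*k) else EE k Om Op w iv)) \<delta> S2"
    using EEd dl by (cases c) (auto intro: zero_bnd)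
  have "bnd (2*(dm*dp*k)) (kron P0m ((if c then 1\<^sub>m (dm*dp*k) else EE k Om Op' w iv) - (if c then 1\<^sub>m (dm*dp*k) else EE k Om Op w iv))
     + kron P1m (EE k Om Op' w iv - EE k Om Op w iv)) \<delta> {i. i mod (dm*dp*k) \<in> S2}"
    by (rule ctrl_bnd[OF Xd EEd])
  moreover have "embed_query k Om Op' q - embed_query k Om Op q =
     kron P0m ((if c then 1\<^sub>m (dm*dp*k) else EE k Om Op' w iv) - (if c then 1\<^sub>m (dm*dp*k) else EE k Om Op w iv))
     + kron P1m (EE k Om Op' w iv - EE k Om Op w iv)"
    unfolding q eq_form[OF C(1,2)] eq_form[OF C(1,3)]
    by (rule ctrl_minus[where N="dm*dp*k"]) (simp_all add: EE_carrier[OF C(1,2)] EE_carrier[OF C(1,3)])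
  ultimately show ?thesis unfolding S2_def by simp
qed


lemma nS_L2: "sqrt (nS A v) = L2_set (\<lambda>i. cmod (v $ i)) {i. i < dim_vec v \<and> i \<in> A}"
  unfolding nS_def L2_set_def by simp

lemma nS_tri: assumes "dim_vec w = dim_vec v"
  shows "sqrt (nS A (v + w)) \<le> sqrt (nS A v) + sqrt (nS A w)"
proof -
  have "sqrt (nS A (v + w)) = L2_set (\<lambda>i. cmod (v $ i + w $ i)) {i. i < dim_vec v \<and> i \<in> A}"
    unfolding nS_L2 using assms by (intro L2_set_cong) auto
  also have "\<dots> \<le> L2_set (\<lambda>i. cmod (v $ i) + cmod (w $ i)) {i. i < dim_vec v \<and> i \<in> A}"
    by (rule L2_set_mono) (auto intro: norm_triangle_ineq)
  also have "\<dots> \<le> sqrt (nS A v) + sqrt (nS A w)"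
    unfolding nS_L2 using assms by (simp add: L2_set_triangle_ineq)
  finally show ?thesis .
qed

lemma bnd_apply: "bnd d M \<alpha> S \<Longrightarrow> v \<in> carrier_vec d \<Longrightarrow> nv (M *\<^sub>v v) \<le> \<alpha> * sqrt (nS S v)"
  unfolding bnd_def nv_def
  by (metis real_sqrt_le_mono real_sqrt_mult real_sqrt_abs abs_of_nonneg)

lemma bnd1_apply: "bnd d M 1 UNIV \<Longrightarrow> v \<in> carrier_vec d \<Longrightarrow> nv (M *\<^sub>v v) \<le> nv v"
  using bnd_apply[of d M 1 UNIV v] by (simp add: nS_UNIV nv_def)

lemma unit_norm_le1: "vnorm2 (unit_vec n 0) \<le> 1"
proof -
  have "vnorm2 (unit_vec n 0) = (\<Sum>i<n. if i = 0 then 1 else 0)"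
    unfolding vnorm2_alt by (intro sum.cong) auto
  also have "\<dots> \<le> 1" by (simp add: sum.delta)
  finally show ?thesis .
qed

lemma alg_state_carrier:
  assumes U: "\<forall>t\<le>T. unitary (2*(dm*dp*k)) (U t)" and O: "unitary dm Om" "unitary dp Op"
  shows "alg_state (2*(dm*dp*k)) k U q Om Op T \<in> carrier_vec (2*(dm*dp*k)) \<and>
         vnorm2 (alg_state (2*(dm*dp*k)) k U q Om Op T) \<le> 1"
  using U
proof (induction T)
  case 0
  have "unitary (2*(dm*dp*k)) (U 0)" using 0 by auto
  then show ?case
    using unit_norm_le1[of "2*(dm*dp*k)"] by (auto simp: unitary_norm unitary_def)
next
  case (Suc T)
  let ?D = "2*(dm*dp*k)"
  let ?s = "alg_state ?D k U q Om Op T"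
  have IH: "?s \<in> carrier_vec ?D" "vnorm2 ?s \<le> 1" using Suc by auto
  have UU: "unitary ?D (U (Suc T))" using Suc by auto
  have Q: "bnd ?D (embed_query k Om Op (q (Suc T))) 1 UNIV" by (rule Q_bnd[OF O])
  have Qs: "embed_query k Om Op (q (Suc T)) *\<^sub>v ?s \<in> carrier_vec ?D"
    using Q IH unfolding bnd_def by auto
  have "vnorm2 (embed_query k Om Op (q (Suc T)) *\<^sub>v ?s) \<le> vnorm2 ?s"
    using Q IH unfolding bnd_def by (auto simp: nS_UNIV)
  then show ?case using UU Qs IH by (auto simp: unitary_norm unitary_def)
qed

lemma nv_zero_diff: "nv (x - x) = 0"
  unfolding nv_def vnorm2_def by simp

lemma nv_unitary: "unitary d U \<Longrightarrow> v \<in> carrier_vec d \<Longrightarrow> nv (U *\<^sub>v v) = nv v"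
  unfolding nv_def by (simp add: unitary_norm)

lemma hybrid:
  assumes U: "\<forall>t\<le>T. unitary (2*(dm*dp*k)) (U t)" and O: "unitary dm Om" "unitary dp Op" "unitary dp Op'"
  shows "nv (alg_state (2*(dm*dp*k)) k U q Om Op' T - alg_state (2*(dm*dp*k)) k U q Om Op T) \<le>
    (\<Sum>t<T. nv ((embed_query k Om Op' (q (Suc t)) - embed_query k Om Op (q (Suc t))) *\<^sub>v
                  alg_state (2*(dm*dp*k)) k U q Om Op t))"
  using U
proof (induction T)
  case 0 then show ?case by (simp add: nv_zero_diff)
next
  case (Suc T)
  let ?D = "2*(dm*dp*k)"
  let ?a = "alg_state ?D k U q Om Op' T"
  let ?b = "alg_state ?D k U q Om Op T"
  let ?Q' = "embed_query k Om Op' (q (Suc T))"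
  let ?Q = "embed_query k Om Op (q (Suc T))"
  have IH: "nv (?a - ?b) \<le> (\<Sum>t<T. nv ((embed_query k Om Op' (q (Suc t)) - embed_query k Om Op (q (Suc t))) *\<^sub>v
                  alg_state ?D k U q Om Op t))" using Suc by auto
  have UT: "\<forall>t\<le>T. unitary ?D (U t)" using Suc.prems by auto
  have a: "?a \<in> carrier_vec ?D" using alg_state_carrier[OF UT O(1) O(3)] by auto
  have b: "?b \<in> carrier_vec ?D" using alg_state_carrier[OF UT O(1) O(2)] by auto
  have UU: "unitary ?D (U (Suc T))" using Suc.prems by auto
  have Q'b: "bnd ?D ?Q' 1 UNIV" by (rule Q_bnd[OF O(1,3)])
  have Qc: "?Q \<in> carrier_mat ?D ?D" "?Q' \<in> carrier_mat ?D ?D"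
    using Q_bnd[OF O(1,2)] Q'b unfolding bnd_def by auto
  have UC: "U (Suc T) \<in> carrier_mat ?D ?D" using UU unfolding unitary_def by auto
  have e1: "alg_state ?D k U q Om Op' (Suc T) - alg_state ?D k U q Om Op (Suc T) = U (Suc T) *\<^sub>v (?Q' *\<^sub>v ?a - ?Q *\<^sub>v ?b)"
    using UC Qc a b by (simp add: mult_minus_distrib_mat_vec)
  have e2: "?Q' *\<^sub>v ?a - ?Q *\<^sub>v ?b = ?Q' *\<^sub>v (?a - ?b) + (?Q' - ?Q) *\<^sub>v ?b"
  proof -
    have "?Q' *\<^sub>v (?a - ?b) = ?Q' *\<^sub>v ?a - ?Q' *\<^sub>v ?b" using Qc a b by (simp add: mult_minus_distrib_mat_vec)
    moreover have "(?Q' - ?Q) *\<^sub>v ?b = ?Q' *\<^sub>v ?b - ?Q *\<^sub>v ?b" using Qc b by (simp add: minus_mult_distrib_mat_vec)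
    ultimately show ?thesis using Qc a b by (intro eq_vecI) auto
  qed
  have "nv (alg_state ?D k U q Om Op' (Suc T) - alg_state ?D k U q Om Op (Suc T)) = nv (?Q' *\<^sub>v (?a - ?b) + (?Q' - ?Q) *\<^sub>v ?b)"
    unfolding e1 e2[symmetric] using UU Qc a b by (intro nv_unitary) auto
  also have "\<dots> \<le> nv (?Q' *\<^sub>v (?a - ?b)) + nv ((?Q' - ?Q) *\<^sub>v ?b)"
    using Qc by (intro nv_add) auto
  also have "\<dots> \<le> nv (?a - ?b) + nv ((?Q' - ?Q) *\<^sub>v ?b)"
    using bnd1_apply[OF Q'b, of "?a - ?b"] a b by auto
  also have "\<dots> \<le> (\<Sum>t<Suc T. nv ((embed_query k Om Op' (q (Suc t)) - embed_query k Om Op (q (Suc t))) *\<^sub>v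
                  alg_state ?D k U q Om Op t))" using IH by simp
  finally show ?case .
qed

lemma sum_if_eq: "finite A \<Longrightarrow> (\<Sum>j\<in>A. if a = j then c else 0) = (if a \<in> A then c else 0)"
proof -
  assume "finite A"
  have "(\<Sum>j\<in>A. if a = j then c else 0) = (\<Sum>j\<in>A. if j = a then c else 0)" by (intro sum.cong) auto
  then show ?thesis using \<open>finite A\<close> by (simp add: sum.delta)
qed

lemma nS_disjoint_sum: "(\<Sum>j<m. nS {i. g i = j} v) \<le> vnorm2 v" for m :: nat
proof -
  have "(\<Sum>j<m. nS {i. g i = j} v) = (\<Sum>i<dim_vec v. \<Sum>j<m. if g i = j then (cmod (v $ i))\<^sup>2 else 0)"
    unfolding nS_alt by (subst sum.swap) simp
  also have "\<dots> = (\<Sum>i<dim_vec v. if g i < m then (cmod (v $ i))\<^sup>2 else 0)"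
    by (intro sum.cong refl) (subst sum_if_eq, auto)
  also have "\<dots> \<le> (\<Sum>i<dim_vec v. (cmod (v $ i))\<^sup>2)" by (intro sum_mono) auto
  finally show ?thesis by (simp add: vnorm2_alt)
qed

lemma sum_sqrt_le: assumes "\<And>j. j < m \<Longrightarrow> x j \<ge> 0"
  shows "(\<Sum>j<m. sqrt (x j)) \<le> sqrt (real m) * sqrt (\<Sum>j<m. x j)"
proof -
  have "(\<Sum>j<m. sqrt (x j)) = (\<Sum>j<m. \<bar>1\<bar> * \<bar>sqrt (x j)\<bar>)" using assms by (intro sum.cong) auto
  also have "\<dots> \<le> L2_set (\<lambda>_. 1::real) {..<m} * L2_set (\<lambda>j. sqrt (x j)) {..<m}"
    by (rule L2_set_mult_ineq)
  also have "L2_set (\<lambda>j. sqrt (x j)) {..<m} = sqrt (\<Sum>j<m. x j)"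
    unfolding L2_set_def using assms by (intro arg_cong[where f=sqrt] sum.cong) auto
  finally show ?thesis by (simp add: L2_set_constant)
qed

lemma lower_core:
  assumes m: "m > 0" and dl: "\<delta> > 0"
    and U: "\<forall>t\<le>T. unitary (2*(dm*dp*k)) (U t)"
    and O: "unitary dm Om" "unitary dp Op0" "\<And>j. j < m \<Longrightarrow> unitary dp (Opf j)"
    and Dif1: "\<And>j. j < m \<Longrightarrow> bnd dp (Opf j - Op0) \<delta> {p. h p = j}"
    and Dif2: "\<And>j. j < m \<Longrightarrow> bnd dp (adj (Opf j) - adj Op0) \<delta> {p. h p = j}"
    and Dist: "\<And>j. j < m \<Longrightarrow> nv (alg_state (2*(dm*dp*k)) k U q Om (Opf j) T - alg_state (2*(dm*dp*k)) k U q Om Op0 T) \<ge> 1/5"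
  shows "real T \<ge> sqrt (real m) / (5 * \<delta>)"
proof -
  let ?D = "2*(dm*dp*k)"
  let ?s = "\<lambda>t. alg_state ?D k U q Om Op0 t"
  let ?d = "\<lambda>j t. nv ((embed_query k Om (Opf j) (q (Suc t)) - embed_query k Om Op0 (q (Suc t))) *\<^sub>v ?s t)"
  define g where "g i = h ((i mod (dm*dp*k) mod (dp*k)) div k)" for i
  have step: "(\<Sum>j<m. ?d j t) \<le> \<delta> * sqrt (real m)" if t: "t < T" for t
  proof -
    have UT: "\<forall>t'\<le>t. unitary ?D (U t')" using U t by auto
    have sc: "?s t \<in> carrier_vec ?D" "vnorm2 (?s t) \<le> 1" using alg_state_carrier[OF UT O(1,2)] by auto
    have "?d j t \<le> \<delta> * sqrt (nS {i. g i = j} (?s t))" if j: "j < m" for j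
    proof -
      have "bnd ?D (embed_query k Om (Opf j) (q (Suc t)) - embed_query k Om Op0 (q (Suc t))) \<delta>
           {i. (i mod (dm*dp*k) mod (dp*k)) div k \<in> {p. h p = j}}"
        by (rule Q_diff_bnd[OF O(1,2) O(3)[OF j] Dif1[OF j] Dif2[OF j]])
      from bnd_apply[OF this sc(1)] show ?thesis unfolding g_def by simp
    qed
    then have "(\<Sum>j<m. ?d j t) \<le> (\<Sum>j<m. \<delta> * sqrt (nS {i. g i = j} (?s t)))" by (intro sum_mono) auto
    also have "\<dots> = \<delta> * (\<Sum>j<m. sqrt (nS {i. g i = j} (?s t)))" by (simp add: sum_distrib_left)
    also have "\<dots> \<le> \<delta> * (sqrt (real m) * sqrt (\<Sum>j<m. nS {i. g i = j} (?s t)))"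
      using dl by (intro mult_left_mono sum_sqrt_le nS_nonneg) auto
    also have "\<dots> \<le> \<delta> * (sqrt (real m) * 1)"
      using dl nS_disjoint_sum[where m=m and g=g and v="?s t"] sc(2) by (intro mult_left_mono) auto
    finally show ?thesis by simp
  qed
  have "real m / 5 = (\<Sum>j<m. (1::real)/5)" by simp
  also have "\<dots> \<le> (\<Sum>j<m. \<Sum>t<T. ?d j t)"
  proof (intro sum_mono)
    fix j assume "j \<in> {..<m}"
    then have j: "j < m" by simp
    show "1/5 \<le> (\<Sum>t<T. ?d j t)"
      using Dist[OF j] hybrid[OF U O(1,2) O(3)[OF j], of q] by linarith
  qed
  also have "\<dots> = (\<Sum>t<T. \<Sum>j<m. ?d j t)" by (rule sum.swap)
  also have "\<dots> \<le> (\<Sum>t<T. \<delta> * sqrt (real m))" by (intro sum_mono step) auto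
  also have "\<dots> = real T * (\<delta> * sqrt (real m))" by simp
  finally have main: "real m / 5 \<le> real T * (\<delta> * sqrt (real m))" .
  have sm: "sqrt (real m) > 0" using m by simp
  have "real m = sqrt (real m) * sqrt (real m)" by simp
  with main have "sqrt (real m) * sqrt (real m) \<le> (5 * real T * \<delta>) * sqrt (real m)" by (simp add: mult_ac)
  then have "sqrt (real m) \<le> 5 * real T * \<delta>" using sm by (rule mult_right_le_imp_le)
  then show ?thesis using dl by (simp add: divide_le_eq mult_ac)
qed


lemma nS_disj_add: "A \<inter> B = {} \<Longrightarrow> nS A v + nS B v \<le> vnorm2 v"
proof -
  assume d: "A \<inter> B = {}"
  have "nS A v + nS B v = (\<Sum>i<dim_vec v. (if i \<in> A then (cmod (v $ i))\<^sup>2 else 0) + (if i \<in> B then (cmod (v $ i))\<^sup>2 else 0))"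
    unfolding nS_alt by (simp add: sum.distrib)
  also have "\<dots> \<le> (\<Sum>i<dim_vec v. (cmod (v $ i))\<^sup>2)" using d by (intro sum_mono) auto
  finally show ?thesis by (simp add: vnorm2_alt)
qed

lemma nv_swap: "dim_vec a = dim_vec b \<Longrightarrow> nv (a - b) = nv (b - a)"
  unfolding nv_def vnorm2_def by (auto intro!: arg_cong[where f=sqrt] sum.cong simp: norm_minus_commute)

lemma distinguish:
  assumes dim: "dim_vec a = dim_vec b" and nb: "vnorm2 b \<le> 1" and d: "A \<inter> B = {}"
    and sa: "nS A a \<ge> 2/3" and sb: "nS B b \<ge> 2/3"
  shows "nv (b - a) \<ge> 1/5"
proof -
  have "nS A b \<le> 1/3" using nS_disj_add[OF d, of b] nb sb by linarith
  then have s1: "sqrt (nS A b) \<le> 3/5"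
    by (intro real_le_lsqrt) (auto simp: nS_nonneg power2_eq_square)
  have s2: "4/5 \<le> sqrt (nS A a)" using sa by (intro real_le_rsqrt) (auto simp: power2_eq_square)
  have e: "a = (a - b) + b" using dim by (intro eq_vecI) auto
  have "sqrt (nS A a) \<le> sqrt (nS A (a - b)) + sqrt (nS A b)"
    using nS_tri[of b "a - b" A] dim e by simp
  also have "sqrt (nS A (a - b)) \<le> nv (a - b)" unfolding nv_def by (simp add: nS_le)
  finally have "4/5 \<le> nv (a - b) + 3/5" using s1 s2 by linarith
  then show ?thesis using nv_swap[OF dim] by simp
qed

lemma success_nS:
  assumes "alg_state D k U q Om Op T \<in> carrier_vec D"
  shows "success_prob D k U q out T Om Op target eps = nS {i. \<bar>out i - target\<bar> \<le> eps} (alg_state D k U q Om Op T)"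
  using assms unfolding success_prob_def nS_def by (intro sum.cong) auto


definition rotE :: "real \<Rightarrow> real \<Rightarrow> nat \<Rightarrow> nat \<Rightarrow> complex" where
  "rotE x y r c = complex_of_real (if r = c then x else if r = 0 then - y else y)"

definition blk4 :: "nat \<Rightarrow> (nat \<Rightarrow> real) \<Rightarrow> (nat \<Rightarrow> real) \<Rightarrow> complex mat" where
  "blk4 n xf yf = mat n n (\<lambda>(r,c). if r div 2 = c div 2 then rotE (xf (r div 2)) (yf (r div 2)) (r mod 2) (c mod 2) else 0)"

lemma blk4_carrier[simp]: "blk4 n xf yf \<in> carrier_mat n n"
  unfolding blk4_def by auto

lemma blk4_dims[simp]: "dim_row (blk4 n xf yf) = n" "dim_col (blk4 n xf yf) = n"
  unfolding blk4_def by auto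

lemma blk4_index: "r < n \<Longrightarrow> c < n \<Longrightarrow> blk4 n xf yf $$ (r,c) =
   (if r div 2 = c div 2 then rotE (xf (r div 2)) (yf (r div 2)) (r mod 2) (c mod 2) else 0)"
  unfolding blk4_def by auto

lemma two_term:
  fixes f :: "nat \<Rightarrow> 'a::comm_monoid_add"
  assumes n: "n = 2*p" and b: "\<beta> < p" and z: "\<And>l. l < n \<Longrightarrow> l div 2 \<noteq> \<beta> \<Longrightarrow> f l = 0"
  shows "(\<Sum>l<n. f l) = f (2*\<beta>) + f (2*\<beta>+1)"
proof -
  have "(\<Sum>l<n. f l) = (\<Sum>i1<p. \<Sum>i2<2. f (i1*2+i2))" unfolding n by (simp add: sum_pair mult.commute)
  also have "\<dots> = (\<Sum>i1<p. if i1 = \<beta> then f (2*\<beta>) + f (2*\<beta>+1) else 0)"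
  proof (intro sum.cong refl)
    fix i1 assume i1: "i1 \<in> {..<p}"
    show "(\<Sum>i2<2. f (i1*2+i2)) = (if i1 = \<beta> then f (2*\<beta>) + f (2*\<beta>+1) else 0)"
    proof (cases "i1 = \<beta>")
      case True then show ?thesis by (simp add: sum_lt2 mult.commute)
    next
      case False
      have "f (i1*2+i2) = 0" if "i2 < 2" for i2
      proof (rule z)
        show "i1*2+i2 < n" using pair_lt[of i1 p i2 2] that i1 n by (simp add: mult.commute)
        show "(i1*2+i2) div 2 \<noteq> \<beta>" using that False by simp
      qed
      then show ?thesis using False by (simp add: sum_lt2)
    qed
  qed
  also have "\<dots> = f (2*\<beta>) + f (2*\<beta>+1)" using b by (simp add: sum.delta)
  finally show ?thesis .
qed

lemma mod2_cases: "(r::nat) mod 2 = 0 \<or> r mod 2 = 1" by auto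

lemma adj_blk4: "adj (blk4 n xf yf) = blk4 n xf (\<lambda>b. - yf b)"
  unfolding adj_def
proof (intro eq_matI)
  fix r c assume "r < dim_row (blk4 n xf (\<lambda>b. - yf b))" "c < dim_col (blk4 n xf (\<lambda>b. - yf b))"
  then have rc: "r < n" "c < n" by auto
  show "mat (dim_col (blk4 n xf yf)) (dim_row (blk4 n xf yf)) (\<lambda>(i, j). cnj (blk4 n xf yf $$ (j, i))) $$ (r, c) =
        blk4 n xf (\<lambda>b. - yf b) $$ (r, c)"
    using rc mod2_cases[of r] mod2_cases[of c]
    by (auto simp: blk4_index rotE_def)
qed auto

lemma blk4_prod:
  assumes n: "n = 2*p" and u: "\<And>b. b < p \<Longrightarrow> (xf b)\<^sup>2 + (yf b)\<^sup>2 = 1"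
  shows "blk4 n xf (\<lambda>b. - yf b) * blk4 n xf yf = 1\<^sub>m n"
proof (intro eq_matI)
  fix r c assume "r < dim_row (1\<^sub>m n)" "c < dim_col (1\<^sub>m n)"
  then have rc: "r < n" "c < n" by auto
  define \<beta> where "\<beta> = r div 2"
  have b: "\<beta> < p" using rc n unfolding \<beta>_def by auto
  have l1: "2*\<beta> < n" "2*\<beta>+1 < n" using b n by auto
  have "(blk4 n xf (\<lambda>b. - yf b) * blk4 n xf yf) $$ (r,c) =
     (\<Sum>l<n. blk4 n xf (\<lambda>b. - yf b) $$ (r,l) * blk4 n xf yf $$ (l,c))"
    using rc by (simp add: scalar_prod_def atLeast0LessThan row_def col_def)
  also have "\<dots> = blk4 n xf (\<lambda>b. - yf b) $$ (r,2*\<beta>) * blk4 n xf yf $$ (2*\<beta>,c)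
      + blk4 n xf (\<lambda>b. - yf b) $$ (r,2*\<beta>+1) * blk4 n xf yf $$ (2*\<beta>+1,c)"
    by (rule two_term[OF n b]) (auto simp: blk4_index rc \<beta>_def)
  also have "\<dots> = 1\<^sub>m n $$ (r,c)"
  proof -
    have x: "complex_of_real (xf \<beta>) * complex_of_real (xf \<beta>) + complex_of_real (yf \<beta>) * complex_of_real (yf \<beta>) = 1"
      using u[OF b] by (simp add: power2_eq_square flip: of_real_mult of_real_add)
    have d1: "(2*\<beta>) div 2 = \<beta>" "(2*\<beta>+1) div 2 = \<beta>" "(2*\<beta>) mod 2 = 0" "(2*\<beta>+1) mod 2 = 1" by auto
    have rr: "r = 2*\<beta> \<or> r = 2*\<beta>+1" unfolding \<beta>_def by auto
    consider (c0) "c = 2*\<beta>" | (c1) "c = 2*\<beta>+1" | (cn) "c div 2 \<noteq> \<beta>" by linarith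
    then show ?thesis
    proof cases
      case c0 then show ?thesis using rr l1 x by (auto simp: blk4_index rotE_def d1 algebra_simps)
    next
      case c1 then show ?thesis using rr l1 x by (auto simp: blk4_index rotE_def d1 algebra_simps)
    next
      case cn
      then have "c \<noteq> r" unfolding \<beta>_def by auto
      then show ?thesis using cn rc l1 by (simp add: blk4_index d1)
    qed
  qed
  finally show "(blk4 n xf (\<lambda>b. - yf b) * blk4 n xf yf) $$ (r,c) = 1\<^sub>m n $$ (r,c)" .
qed auto

lemma unitary_blk4:
  assumes n: "n = 2*p" and u: "\<And>b. b < p \<Longrightarrow> (xf b)\<^sup>2 + (yf b)\<^sup>2 = 1"
  shows "unitary n (blk4 n xf yf)"
proof -
  have u2: "\<And>b. b < p \<Longrightarrow> (xf b)\<^sup>2 + (- yf b)\<^sup>2 = 1" using u by simp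
  show ?thesis unfolding unitary_def adj_blk4
    using blk4_prod[OF n u] blk4_prod[OF n u2] by simp
qed

lemma mat_unit: "(A :: complex mat) \<in> carrier_mat n n \<Longrightarrow> c < n \<Longrightarrow> A *\<^sub>v unit_vec n c = vec n (\<lambda>r. A $$ (r,c))"
proof (intro eq_vecI)
  fix r assume A: "A \<in> carrier_mat n n" and c: "c < n" and r: "r < dim_vec (vec n (\<lambda>r. A $$ (r, c)))"
  have "(A *\<^sub>v unit_vec n c) $ r = (\<Sum>l<n. A $$ (r,l) * unit_vec n c $ l)"
    using r by (intro mv_sum[OF A]) auto
  also have "\<dots> = (\<Sum>l<n. if l = c then A $$ (r,c) else 0)" using c by (intro sum.cong) auto
  also have "\<dots> = A $$ (r,c)" using c by (simp add: sum.delta)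
  finally show "(A *\<^sub>v unit_vec n c) $ r = vec n (\<lambda>r. A $$ (r, c)) $ r" using r by simp
qed auto

lemma blk4_minus: "blk4 n xf yf - blk4 n xf' yf' = blk4 n (\<lambda>b. xf b - xf' b) (\<lambda>b. yf b - yf' b)"
  by (intro eq_matI) (auto simp: blk4_index rotE_def)

lemma rotE_bound: "\<bar>x\<bar> \<le> d \<Longrightarrow> \<bar>y\<bar> \<le> d \<Longrightarrow> cmod (rotE x y r c) \<le> d"
  unfolding rotE_def by auto

lemma sq_sum_le: "(a + b)\<^sup>2 \<le> 2 * (a\<^sup>2 + b\<^sup>2)" for a b :: real
proof -
  have h: "(a+b)\<^sup>2 + (a-b)\<^sup>2 = 2*(a\<^sup>2+b\<^sup>2)" by (simp add: power2_eq_square algebra_simps)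
  have "(a-b)\<^sup>2 \<ge> 0" by simp
  with h show ?thesis by linarith
qed

lemma blk4_bnd:
  assumes n: "n = 2*p" and b0: "\<beta>0 < p"
    and z: "\<And>b. b \<noteq> \<beta>0 \<Longrightarrow> xd b = 0 \<and> yd b = 0"
    and dx: "\<bar>xd \<beta>0\<bar> \<le> d" and dy: "\<bar>yd \<beta>0\<bar> \<le> d"
  shows "bnd n (blk4 n xd yd) (2*d) {l. l div 2 = \<beta>0}"
  unfolding bnd_def
proof (intro conjI ballI)
  show "blk4 n xd yd \<in> carrier_mat n n" by simp
  show "2*d \<ge> 0" using dx by simp
  fix v :: "complex vec" assume v: "v \<in> carrier_vec n"
  let ?M = "blk4 n xd yd"
  have l1: "2*\<beta>0 < n" "2*\<beta>0+1 < n" using b0 n by auto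
  have d1: "(2*\<beta>0) div 2 = \<beta>0" "(2*\<beta>0+1) div 2 = \<beta>0" by auto
  have Mz: "?M $$ (r,c) = 0" if "r < n" "c < n" "r div 2 \<noteq> \<beta>0" for r c
    using that z[of "r div 2"] by (auto simp: blk4_index rotE_def)
  have Mb: "cmod (?M $$ (r,c)) \<le> d" if "r < n" "c < n" for r c
  proof -
    have h: "\<bar>xd (r div 2)\<bar> \<le> d \<and> \<bar>yd (r div 2)\<bar> \<le> d" using dx dy z[of "r div 2"] by (cases "r div 2 = \<beta>0") auto
    have "d \<ge> 0" using dx by simp
    then show ?thesis using that h by (auto simp: blk4_index intro!: rotE_bound)
  qed
  have row: "cmod ((?M *\<^sub>v v) $ r) \<le> d * cmod (v $ (2*\<beta>0)) + d * cmod (v $ (2*\<beta>0+1))" if r: "r < n" for r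
  proof (cases "r div 2 = \<beta>0")
    case True
    have "(?M *\<^sub>v v) $ r = (\<Sum>c<n. ?M $$ (r,c) * v $ c)" using r by (intro mv_sum[OF _ v]) auto
    also have "\<dots> = ?M $$ (r,2*\<beta>0) * v $ (2*\<beta>0) + ?M $$ (r,2*\<beta>0+1) * v $ (2*\<beta>0+1)"
      using True r by (intro two_term[OF n b0]) (auto simp: blk4_index)
    finally have e: "(?M *\<^sub>v v) $ r = ?M $$ (r,2*\<beta>0) * v $ (2*\<beta>0) + ?M $$ (r,2*\<beta>0+1) * v $ (2*\<beta>0+1)" .
    have "cmod ((?M *\<^sub>v v) $ r) \<le> cmod (?M $$ (r,2*\<beta>0)) * cmod (v $ (2*\<beta>0)) + cmod (?M $$ (r,2*\<beta>0+1)) * cmod (v $ (2*\<beta>0+1))"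
      unfolding e by (metis norm_mult norm_triangle_ineq)
    also have "\<dots> \<le> d * cmod (v $ (2*\<beta>0)) + d * cmod (v $ (2*\<beta>0+1))"
      using Mb[OF r l1(1)] Mb[OF r l1(2)] by (intro add_mono mult_right_mono) auto
    finally show ?thesis .
  next
    case False
    have "(?M *\<^sub>v v) $ r = (\<Sum>c<n. ?M $$ (r,c) * v $ c)" using r by (intro mv_sum[OF _ v]) auto
    also have "\<dots> = 0" using False r by (intro sum.neutral) (auto simp: Mz)
    finally show ?thesis using dx by simp
  qed
  have zr: "(?M *\<^sub>v v) $ r = 0" if "r < n" "r div 2 \<noteq> \<beta>0" for r
  proof -
    have "(?M *\<^sub>v v) $ r = (\<Sum>c<n. ?M $$ (r,c) * v $ c)" using that by (intro mv_sum[OF _ v]) auto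
    also have "\<dots> = 0" using that by (intro sum.neutral) (auto simp: Mz)
    finally show ?thesis .
  qed
  let ?a = "cmod (v $ (2*\<beta>0))" and ?b = "cmod (v $ (2*\<beta>0+1))"
  have "vnorm2 (?M *\<^sub>v v) = (\<Sum>r<n. (cmod ((?M *\<^sub>v v) $ r))\<^sup>2)" by (simp add: vnorm2_alt)
  also have "\<dots> = (cmod ((?M *\<^sub>v v) $ (2*\<beta>0)))\<^sup>2 + (cmod ((?M *\<^sub>v v) $ (2*\<beta>0+1)))\<^sup>2"
    by (intro two_term[OF n b0]) (auto simp: zr simp del: index_mult_mat_vec)
  also have "\<dots> \<le> (d * ?a + d * ?b)\<^sup>2 + (d * ?a + d * ?b)\<^sup>2"
    using row[OF l1(1)] row[OF l1(2)] by (intro add_mono power_mono) auto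
  also have "\<dots> \<le> 2 * (2 * ((d*?a)\<^sup>2 + (d*?b)\<^sup>2))"
    using sq_sum_le[of "d*?a" "d*?b"] by linarith
  also have "\<dots> = (2*d)\<^sup>2 * (?a\<^sup>2 + ?b\<^sup>2)" by (simp add: power2_eq_square algebra_simps)
  also have "?a\<^sup>2 + ?b\<^sup>2 = nS {l. l div 2 = \<beta>0} v"
  proof -
    have "nS {l. l div 2 = \<beta>0} v = (\<Sum>l<n. if l \<in> {l. l div 2 = \<beta>0} then (cmod (v $ l))\<^sup>2 else 0)"
      using v by (simp add: nS_alt)
    also have "\<dots> = ?a\<^sup>2 + ?b\<^sup>2" by (subst two_term[OF n b0]) (auto simp: d1)
    finally show ?thesis by simp
  qed
  finally show "vnorm2 (?M *\<^sub>v v) \<le> (2*d)\<^sup>2 * nS {l. l div 2 = \<beta>0} v" .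
qed


definition sc1 :: "complex \<Rightarrow> complex mat" where "sc1 z = mat 1 1 (\<lambda>_. z)"

lemma sc1_carrier[simp]: "sc1 z \<in> carrier_mat 1 1" and sc1_dims[simp]: "dim_row (sc1 z) = 1" "dim_col (sc1 z) = 1"
  unfolding sc1_def by auto

lemma sc1_carrier'[simp]: "sc1 z \<in> carrier_mat (Suc 0) (Suc 0)"
  unfolding sc1_def by auto

lemma sc1_index[simp]: "sc1 z $$ (0,0) = z" unfolding sc1_def by simp

lemma mat11_eq: "X \<in> carrier_mat 1 1 \<Longrightarrow> X = sc1 (X $$ (0,0))"
  unfolding sc1_def by (intro eq_matI) auto

lemma psd1_D: assumes "psd 1 X" shows "X \<in> carrier_mat 1 1" "Re (X $$ (0,0)) \<ge> 0"
proof -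
  show X: "X \<in> carrier_mat 1 1" using assms unfolding psd_def hermitian_def by auto
  have "Re (cinner (unit_vec 1 0) (X *\<^sub>v unit_vec 1 0)) \<ge> 0"
    using assms unfolding psd_def by auto
  moreover have "cinner (unit_vec 1 0) (X *\<^sub>v unit_vec 1 0) = X $$ (0,0)"
    using X unfolding cinner_def by (simp add: mv_sum[OF X] del: index_mult_mat_vec)
  ultimately show "Re (X $$ (0,0)) \<ge> 0" by simp
qed

lemma psd1_I: assumes "x \<ge> 0" shows "psd 1 (sc1 (complex_of_real x))"
  unfolding psd_def hermitian_def
proof (intro conjI ballI)
  show "sc1 (complex_of_real x) \<in> carrier_mat 1 1" by simp
  show "adj (sc1 (complex_of_real x)) = sc1 (complex_of_real x)"
    unfolding adj_def by (intro eq_matI) auto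
  fix v :: "complex vec" assume v: "v \<in> carrier_vec 1"
  have e: "cinner v (sc1 (complex_of_real x) *\<^sub>v v) = complex_of_real (x * (cmod (v $ 0))\<^sup>2)"
  proof -
    have "cinner v (sc1 (complex_of_real x) *\<^sub>v v) = cnj (v $ 0) * (complex_of_real x * v $ 0)"
      using v unfolding cinner_def by (simp add: mv_sum[OF sc1_carrier v] del: index_mult_mat_vec)
    also have "\<dots> = complex_of_real x * (cnj (v $ 0) * v $ 0)" by (simp add: mult_ac)
    also have "cnj (v $ 0) * v $ 0 = complex_of_real ((cmod (v $ 0))\<^sup>2)"
      using complex_norm_square[of "v $ 0"] by (simp add: mult.commute)
    finally show ?thesis by simp
  qed
  show "Im (cinner v (sc1 (complex_of_real x) *\<^sub>v v)) = 0" unfolding e by simp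
  show "Re (cinner v (sc1 (complex_of_real x) *\<^sub>v v)) \<ge> 0" unfolding e using assms by simp
qed

lemma mtrace_prod1: "X \<in> carrier_mat 1 1 \<Longrightarrow> mtrace (sc1 a * X) = a * X $$ (0,0)"
  unfolding mtrace_def by (simp add: scalar_prod_def row_def col_def sc1_def)

lemma one_sc1: "1\<^sub>m 1 = sc1 1" unfolding sc1_def by (intro eq_matI) auto

locale lp1 =
  fixes m :: nat and \<alpha> :: "nat \<Rightarrow> real" and jm :: nat
  assumes jm: "jm < m" and lo: "\<And>j. j < m \<Longrightarrow> 1/4 \<le> \<alpha> j" and hi: "\<And>j. j < m \<Longrightarrow> \<alpha> j \<le> \<alpha> jm"
begin

definition Am :: "nat \<Rightarrow> complex mat" where "Am j = sc1 (complex_of_real (\<alpha> j))"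
definition b1 :: "nat \<Rightarrow> real" where "b1 j = 1"

lemma apos: "\<alpha> jm > 0" using lo[OF jm] by simp

lemma feas_iff: "primal_feasible 1 m (1\<^sub>m 1) Am b1 X \<longleftrightarrow> psd 1 X \<and> (\<forall>j<m. \<alpha> j * Re (X $$ (0,0)) \<le> 1)"
proof -
  have "psd 1 X \<Longrightarrow> Re (mtrace (Am j * X)) = \<alpha> j * Re (X $$ (0,0))" for j
    using psd1_D[of X] unfolding Am_def by (simp add: mtrace_prod1)
  then show ?thesis unfolding primal_feasible_def b1_def by auto
qed

definition Xs where "Xs = sc1 (complex_of_real (1 / \<alpha> jm))"

lemma Xs_feas: "primal_feasible 1 m (1\<^sub>m 1) Am b1 Xs"
  unfolding feas_iff Xs_def
proof (intro conjI allI impI psd1_I)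
  show "0 \<le> 1 / \<alpha> jm" using apos by simp
  fix j assume "j < m"
  then show "\<alpha> j * Re (sc1 (complex_of_real (1 / \<alpha> jm)) $$ (0, 0)) \<le> 1"
    using hi[of j] apos by (simp add: field_simps)
qed

lemma obj_eq: "X \<in> carrier_mat 1 1 \<Longrightarrow> primal_obj (1\<^sub>m 1) X = Re (X $$ (0,0))"
  unfolding primal_obj_def one_sc1 by (simp add: mtrace_prod1)

lemma obj_eq': "X \<in> carrier_mat (Suc 0) (Suc 0) \<Longrightarrow> primal_obj (1\<^sub>m (Suc 0)) X = Re (X $$ (0,0))"
  using obj_eq by simp

lemma obj_le: "primal_feasible 1 m (1\<^sub>m 1) Am b1 X \<Longrightarrow> primal_obj (1\<^sub>m 1) X \<le> 1 / \<alpha> jm"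
proof -
  assume f: "primal_feasible 1 m (1\<^sub>m 1) Am b1 X"
  then have X: "X \<in> carrier_mat 1 1" and c: "\<alpha> jm * Re (X $$ (0,0)) \<le> 1"
    using feas_iff psd1_D jm by auto
  then show ?thesis using apos by (simp add: obj_eq field_simps mult.commute)
    (simp add: obj_eq' mult.commute)
qed

lemma Xs_obj: "primal_obj (1\<^sub>m 1) Xs = 1 / \<alpha> jm"
  unfolding Xs_def by (simp add: obj_eq')

lemma primal_opt: "primal_optimal 1 m (1\<^sub>m 1) Am b1 Xs"
  unfolding primal_optimal_def using Xs_feas obj_le Xs_obj by auto

lemma Xs_trace: "Re (mtrace Xs) = 1 / \<alpha> jm"
  unfolding Xs_def mtrace_def by simp

lemma opt_value: "opt_val 1 m (1\<^sub>m 1) Am b1 = 1 / \<alpha> jm"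
  unfolding opt_val_def
  by (rule cSup_eq_maximum) (use Xs_feas Xs_obj obj_le in \<open>auto intro!: image_eqI\<close>)

definition ys where "ys j = (if j = jm then 1 / \<alpha> jm else 0)"

lemma dual_mat: "mat 1 1 (\<lambda>(r,c). \<Sum>j<m. complex_of_real (y j) * Am j $$ (r,c)) - 1\<^sub>m 1
   = sc1 (complex_of_real ((\<Sum>j<m. y j * \<alpha> j) - 1))"
  unfolding Am_def sc1_def by (intro eq_matI) auto

lemma dual_feas_D: "dual_feasible 1 m (1\<^sub>m 1) Am y \<Longrightarrow> (\<Sum>j<m. y j * \<alpha> j) \<ge> 1"
  unfolding dual_feasible_def dual_mat using psd1_D(2) by fastforce

lemma ys_sum: "(\<Sum>j<m. ys j * \<alpha> j) = 1" "(\<Sum>j<m. ys j) = 1 / \<alpha> jm"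
proof -
  have "(\<Sum>j<m. ys j * \<alpha> j) = (\<Sum>j<m. if j = jm then 1 / \<alpha> jm * \<alpha> jm else 0)"
    unfolding ys_def by (intro sum.cong) auto
  then show "(\<Sum>j<m. ys j * \<alpha> j) = 1" using jm apos by (simp add: sum.delta)
  show "(\<Sum>j<m. ys j) = 1 / \<alpha> jm" using jm unfolding ys_def by (simp add: sum.delta)
qed

lemma ys_feas: "dual_feasible 1 m (1\<^sub>m 1) Am ys"
  unfolding dual_feasible_def dual_mat ys_sum
  using apos psd1_I[of 0] by (auto simp: ys_def)

lemma dual_opt: "dual_optimal 1 m (1\<^sub>m 1) Am b1 ys"
  unfolding dual_optimal_def
proof (intro conjI allI impI ys_feas)
  fix y' assume f: "dual_feasible 1 m (1\<^sub>m 1) Am y'"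
  have nn: "\<And>j. j < m \<Longrightarrow> y' j \<ge> 0" using f unfolding dual_feasible_def by auto
  have "1 \<le> (\<Sum>j<m. y' j * \<alpha> j)" by (rule dual_feas_D[OF f])
  also have "\<dots> \<le> (\<Sum>j<m. y' j * \<alpha> jm)" using nn hi by (intro sum_mono mult_left_mono) auto
  also have "\<dots> = \<alpha> jm * (\<Sum>j<m. y' j)" by (simp add: sum_distrib_left mult.commute)
  finally have "1 / \<alpha> jm \<le> (\<Sum>j<m. y' j)" using apos by (simp add: field_simps)
  then show "(\<Sum>j<m. b1 j * ys j) \<le> (\<Sum>j<m. b1 j * y' j)" unfolding b1_def using ys_sum by simp
qed

lemma ys_l1: "(\<Sum>j<m. \<bar>ys j\<bar>) = 1 / \<alpha> jm"
  using ys_sum(2) apos by (simp add: ys_def)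

lemma inv_le4: "1 / \<alpha> jm \<le> 4"
  using lo[OF jm] by (simp add: field_simps)

end


lemma sqrt_diff: assumes "a \<ge> 0" "b > 0" shows "\<bar>sqrt a - sqrt b\<bar> \<le> \<bar>a - b\<bar> / sqrt b"
proof -
  have sb: "sqrt b > 0" using assms by simp
  have sa: "sqrt a \<ge> 0" using assms by simp
  have "(sqrt a - sqrt b) * (sqrt a + sqrt b) = a - b"
    using assms by (simp add: algebra_simps)
  then have "\<bar>sqrt a - sqrt b\<bar> * (sqrt a + sqrt b) = \<bar>a - b\<bar>"
    using sa sb by (metis abs_mult abs_of_nonneg add_nonneg_nonneg less_imp_le)
  then have "\<bar>sqrt a - sqrt b\<bar> * sqrt b \<le> \<bar>a - b\<bar>"
    using sa by (smt (verit) abs_ge_zero mult_left_mono)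
  then show ?thesis using sb by (simp add: field_simps)
qed

lemma sqrt_half_diff: assumes "a \<ge> 0" shows "\<bar>sqrt a - sqrt (1/2)\<bar> \<le> 2 * \<bar>a - 1/2\<bar>"
proof -
  have h: "1/2 \<le> sqrt (1/2::real)" by (intro real_le_rsqrt) (simp add: power2_eq_square)
  have "\<bar>sqrt a - sqrt (1/2)\<bar> \<le> \<bar>a - 1/2\<bar> / sqrt (1/2)" by (rule sqrt_diff) (use assms in auto)
  also have "\<dots> \<le> \<bar>a - 1/2\<bar> / (1/2)"
    using h by (intro divide_left_mono) auto
  finally show ?thesis by simp
qed

locale params =
  fixes B eps :: real and m :: nat
  assumes B: "B \<ge> 1" and e0: "0 < eps" and e1: "eps \<le> 1/2" and m2: "m \<ge> 2"
begin

definition x0 where "x0 = sqrt (1/2)"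
definition xp where "xp = sqrt (1/2 + eps/B)"
definition yp where "yp = sqrt (1/2 - eps/B)"
definition x1 where "x1 = sqrt (1/2 - 1/(2*B))"
definition y1 where "y1 = sqrt (1/2 + 1/(2*B))"

definition xf :: "nat \<Rightarrow> nat \<Rightarrow> real" where
  "xf z \<beta> = (if z < m \<and> \<beta> = 2*z then xp else if even \<beta> then x0 else x1)"
definition yf :: "nat \<Rightarrow> nat \<Rightarrow> real" where
  "yf z \<beta> = (if z < m \<and> \<beta> = 2*z then yp else if even \<beta> then x0 else y1)"

definition psiv :: "real \<Rightarrow> real \<Rightarrow> complex vec" where
  "psiv x y = vec 2 (\<lambda>i. if i = 0 then complex_of_real x else complex_of_real y)"

definition inst :: "nat \<Rightarrow> qs_instance" where
  "inst z = \<lparr>psi = (\<lambda>j s. psiv (xf z (2*j+s)) (yf z (2*j+s))), mup = (\<lambda>_. B/2), mum = (\<lambda>_. B/2),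
     muI = (\<lambda>_. 0), Opsi = blk4 (m*2*(1*2*1)) (xf z) (yf z)\<rparr>"

lemma epsB: "eps / B \<le> 1/2" "eps / B > 0" "1/(2*B) \<le> 1/2" "1/(2*B) > 0"
  using B e0 e1 by (auto simp: field_simps)

lemma sq: "x0\<^sup>2 = 1/2" "xp\<^sup>2 = 1/2 + eps/B" "yp\<^sup>2 = 1/2 - eps/B" "x1\<^sup>2 = 1/2 - 1/(2*B)" "y1\<^sup>2 = 1/2 + 1/(2*B)"
  unfolding x0_def xp_def yp_def x1_def y1_def using epsB by auto

lemma unit_xy: "(xf z \<beta>)\<^sup>2 + (yf z \<beta>)\<^sup>2 = 1"
  unfolding xf_def yf_def using sq by auto

lemma Opsi_unitary: "unitary (m*2*(1*2*1)) (blk4 (m*2*(1*2*1)) (xf z) (yf z))"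
  by (rule unitary_blk4[where p="2*m"]) (auto simp: unit_xy)

lemma psiv_norm: "vnorm2 (psiv x y) = x\<^sup>2 + y\<^sup>2"
  unfolding psiv_def vnorm2_alt by (simp add: sum_lt2)

lemma dx: "\<bar>xp - x0\<bar> \<le> 2*eps/B" "\<bar>yp - x0\<bar> \<le> 2*eps/B"
proof -
  show "\<bar>xp - x0\<bar> \<le> 2*eps/B" unfolding xp_def x0_def using sqrt_half_diff[of "1/2 + eps/B"] epsB by auto
  show "\<bar>yp - x0\<bar> \<le> 2*eps/B" unfolding yp_def x0_def using sqrt_half_diff[of "1/2 - eps/B"] epsB by auto
qed


definition alpha :: "nat \<Rightarrow> nat \<Rightarrow> real" where
  "alpha z j = (if z < m \<and> j = z then 1/4 + eps/2 else 1/4)"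

lemma rho_psiv: "rho_of 1 2 1 (psiv x y) = sc1 (complex_of_real (x\<^sup>2))"
  unfolding rho_of_def sc1_def psiv_def by (intro eq_matI) (auto simp: power2_eq_square)

lemma rho_psiv': "rho_of (Suc 0) 2 (Suc 0) (psiv x y) = sc1 (complex_of_real (x\<^sup>2))"
  using rho_psiv by simp

lemma A_eq: "A_of 1 2 1 (inst z) j = sc1 (complex_of_real (alpha z j))"
proof -
  have ne: "Suc (2*j) \<noteq> 2*z" by presburger
  have x: "xf z (2*j) = (if z < m \<and> j = z then xp else x0)" "xf z (Suc (2*j)) = x1"
    unfolding xf_def using ne by auto
  have a: "B/2 * (xf z (2*j))\<^sup>2 - B/2 * (xf z (Suc (2*j)))\<^sup>2 = alpha z j"
    unfolding x alpha_def using sq B by (auto simp: field_simps)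
  show ?thesis
    unfolding A_of_def inst_def using a[symmetric]
    by (intro eq_matI) (auto simp: rho_psiv rho_psiv' sc1_def)
qed

lemma col_eq:
  assumes j: "j < m" and s: "s < 2"
  shows "blk4 (m*2*(1*2*1)) (xf z) (yf z) *\<^sub>v unit_vec (m*2*(1*2*1)) ((j*2+s)*(1*2*1))
    = vkron (vkron (unit_vec m j) (unit_vec 2 s)) (psiv (xf z (2*j+s)) (yf z (2*j+s)))"
proof -
  let ?N = "m*2*(1*2*1)"
  have "j*2+s < m*2" using j s by linarith
  then have c: "(j*2+s)*(1*2*1) < ?N" by simp
  have e: "blk4 ?N (xf z) (yf z) *\<^sub>v unit_vec ?N ((j*2+s)*(1*2*1)) = vec ?N (\<lambda>r. blk4 ?N (xf z) (yf z) $$ (r, (j*2+s)*(1*2*1)))"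
    by (rule mat_unit[OF blk4_carrier c])
  show ?thesis unfolding e
  proof (intro eq_vecI)
    fix r assume "r < dim_vec (vkron (vkron (unit_vec m j) (unit_vec 2 s)) (psiv (xf z (2*j+s)) (yf z (2*j+s))))"
    then have r: "r < m*2*2" by (simp add: vkron_def psiv_def)
    have r2: "r div 2 div 2 < m" "r div 2 < m*2" using r by (auto simp: less_mult_imp_div_less)
    have rdec: "r div 2 = r div 2 div 2 * 2 + r div 2 mod 2" by simp
    have cd: "(j*2+s)*(1*2*1) div 2 = j*2+s" "(j*2+s)*(1*2*1) mod 2 = 0" by auto
    have L: "blk4 ?N (xf z) (yf z) $$ (r, (j*2+s)*(1*2*1)) =
       (if r div 2 = j*2+s then (if r mod 2 = 0 then complex_of_real (xf z (j*2+s)) else complex_of_real (yf z (j*2+s))) else 0)"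
      using r c by (auto simp: blk4_index cd rotE_def)
    have R: "vkron (vkron (unit_vec m j) (unit_vec 2 s)) (psiv (xf z (2*j+s)) (yf z (2*j+s))) $ r =
       (if r div 2 div 2 = j then 1 else 0) * (if r div 2 mod 2 = s then 1 else 0) *
       (if r mod 2 = 0 then complex_of_real (xf z (2*j+s)) else complex_of_real (yf z (2*j+s)))"
      using r r2 j s by (simp add: vkron_def psiv_def)
    show "vec ?N (\<lambda>r. blk4 ?N (xf z) (yf z) $$ (r, (j*2+s)*(1*2*1))) $ r =
      vkron (vkron (unit_vec m j) (unit_vec 2 s)) (psiv (xf z (2*j+s)) (yf z (2*j+s))) $ r"
      unfolding R using r L rdec s by (auto simp: mult.commute)
  qed (simp add: vkron_def psiv_def)
qed

lemma valid: "valid_instance m 1 2 1 B (inst z)"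
  unfolding valid_instance_def
proof (intro conjI allI impI)
  fix j s assume "j < m" "s < (2::nat)"
  show "psi (inst z) j s \<in> carrier_vec (1*2*1)" unfolding inst_def psiv_def by simp
  show "vnorm2 (psi (inst z) j s) = 1" unfolding inst_def by (simp add: psiv_norm unit_xy)
  show "Opsi (inst z) *\<^sub>v unit_vec (m*2*(1*2*1)) ((j*2+s)*(1*2*1)) =
     vkron (vkron (unit_vec m j) (unit_vec 2 s)) (psi (inst z) j s)"
    unfolding inst_def using col_eq[OF \<open>j<m\<close> \<open>s<2\<close>] by simp
next
  show "unitary (m*2*(1*2*1)) (Opsi (inst z))" using Opsi_unitary[of z] by (simp add: inst_def)
qed (use B in \<open>auto simp: inst_def\<close>)

end


lemma bnd_mono: "bnd n M \<alpha> S \<Longrightarrow> S \<subseteq> S' \<Longrightarrow> bnd n M \<alpha> S'"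
  unfolding bnd_def using nS_mono
  by (meson order_trans mult_left_mono zero_le_power2)

lemma Omu_one: "Omu m 1 enc I = 1\<^sub>m (m*1)"
  unfolding Omu_def by (intro eq_matI) auto

lemma unitary_one: "unitary n (1\<^sub>m n)"
  unfolding unitary_def adj_def by (auto intro!: eq_matI)

context params
begin

definition jmz :: "nat \<Rightarrow> nat" where "jmz z = (if z < m then z else 0)"

lemma lp: "lp1 m (alpha z) (jmz z)"
  by unfold_locales (use m2 e0 in \<open>auto simp: jmz_def alpha_def\<close>)

lemma A_fun: "A_of 1 2 1 (inst z) = lp1.Am (alpha z)"
  by (rule ext) (simp only: A_eq lp1.Am_def[OF lp])

lemma b_fun: "(\<lambda>_. 1::real) = lp1.b1"
  by (rule ext) (simp add: lp1.b1_def[OF lp[of 0]])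

lemma opt_inst: "opt_val 1 m (1\<^sub>m 1) (A_of 1 2 1 (inst z)) (\<lambda>_. 1) = (if z < m then 1 / (1/4 + eps/2) else 4)"
  unfolding A_fun b_fun using lp1.opt_value[OF lp[of z]] by (simp add: jmz_def alpha_def)

lemma primal_inst: "\<exists>X. primal_optimal 1 m (1\<^sub>m 1) (A_of 1 2 1 (inst z)) (\<lambda>_. 1) X \<and> Re (mtrace X) \<le> 4"
  unfolding A_fun b_fun
  using lp1.primal_opt[OF lp[of z]] lp1.Xs_trace[OF lp[of z]] lp1.inv_le4[OF lp[of z]] by auto

lemma dual_inst: "\<exists>y. dual_optimal 1 m (1\<^sub>m 1) (A_of 1 2 1 (inst z)) (\<lambda>_. 1) y \<and> (\<Sum>j<m. \<bar>y j\<bar>) \<le> 4"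
  unfolding A_fun b_fun
  using lp1.dual_opt[OF lp[of z]] lp1.ys_l1[OF lp[of z]] lp1.inv_le4[OF lp[of z]] by auto

lemma A_diag: "diagonal_mat (A_of 1 2 1 (inst z) j)"
  unfolding A_eq diagonal_mat_def by simp

lemma A_opnorm: "opnorm_le1 1 (A_of 1 2 1 (inst z) j)"
  unfolding A_eq opnorm_le1_def
proof (intro conjI ballI)
  show "sc1 (complex_of_real (alpha z j)) \<in> carrier_mat 1 1" by simp
  fix v :: "complex vec" assume v: "v \<in> carrier_vec 1"
  have a: "0 \<le> alpha z j" "alpha z j \<le> 1" using e0 e1 unfolding alpha_def by auto
  have "vnorm2 (sc1 (complex_of_real (alpha z j)) *\<^sub>v v) = (alpha z j)\<^sup>2 * (cmod (v $ 0))\<^sup>2"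
    using v unfolding vnorm2_alt by (simp add: mv_sum[OF sc1_carrier v] norm_mult power_mult_distrib del: index_mult_mat_vec)
  also have "\<dots> \<le> 1 * (cmod (v $ 0))\<^sup>2" using a by (intro mult_right_mono) (auto simp: power_le_one)
  also have "\<dots> = vnorm2 v" using v unfolding vnorm2_alt by simp
  finally show "vnorm2 (sc1 (complex_of_real (alpha z j)) *\<^sub>v v) \<le> vnorm2 v" .
qed

lemma diff_bnd:
  assumes j: "j < m"
  shows "bnd (m*2*(1*2*1)) (Opsi (inst j) - Opsi (inst m)) (4*eps/B) {p. p div 4 = j}"
    and "bnd (m*2*(1*2*1)) (adj (Opsi (inst j)) - adj (Opsi (inst m))) (4*eps/B) {p. p div 4 = j}"
proof -
  have n: "m*2*(1*2*1) = 2*(2*m)" by simp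
  have b0: "2*j < 2*m" using j by simp
  have sub: "{l. l div 2 = 2*j} \<subseteq> {p. p div 4 = j}" by (auto simp: div_mult2_eq[symmetric])
  have xz: "b \<noteq> 2*j \<Longrightarrow> xf j b - xf m b = 0 \<and> yf j b - yf m b = 0" for b
    unfolding xf_def yf_def by auto
  have xe: "xf j (2*j) - xf m (2*j) = xp - x0" "yf j (2*j) - yf m (2*j) = yp - x0"
    using j unfolding xf_def yf_def by auto
  have "bnd (m*2*(1*2*1)) (blk4 (m*2*(1*2*1)) (\<lambda>b. xf j b - xf m b) (\<lambda>b. yf j b - yf m b)) (2*(2*eps/B)) {l. l div 2 = 2*j}"
    by (rule blk4_bnd[OF n b0]) (use xz xe dx in auto)
  then show "bnd (m*2*(1*2*1)) (Opsi (inst j) - Opsi (inst m)) (4*eps/B) {p. p div 4 = j}"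
    unfolding inst_def by (simp add: blk4_minus) (rule bnd_mono[OF _ sub], simp)
  have xz': "b \<noteq> 2*j \<Longrightarrow> xf j b - xf m b = 0 \<and> - yf j b - - yf m b = 0" for b
    unfolding xf_def yf_def by auto
  have xe': "- yf j (2*j) - - yf m (2*j) = - (yp - x0)"
    using j unfolding xf_def yf_def by auto
  have "bnd (m*2*(1*2*1)) (blk4 (m*2*(1*2*1)) (\<lambda>b. xf j b - xf m b) (\<lambda>b. - yf j b - - yf m b)) (2*(2*eps/B)) {l. l div 2 = 2*j}"
    by (rule blk4_bnd[OF n b0]) (use xz' xe xe' dx in auto)
  then show "bnd (m*2*(1*2*1)) (adj (Opsi (inst j)) - adj (Opsi (inst m))) (4*eps/B) {p. p div 4 = j}"
    unfolding inst_def by (simp add: blk4_minus adj_blk4) (rule bnd_mono[OF _ sub], simp)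
qed

lemma targets_disjoint:
  "{i. \<bar>out i - 4\<bar> \<le> eps} \<inter> {i. \<bar>out i - 1 / (1/4 + eps/2)\<bar> \<le> eps} = {}"
proof -
  have t: "1 / (1/4 + eps/2) = 4 / (1 + 2*eps)" using e0 by (simp add: field_simps)
  have g: "4 - 4 / (1 + 2*eps) > 2*eps"
  proof -
    have "4 - 4 / (1 + 2*eps) = 8*eps / (1 + 2*eps)" using e0 by (simp add: field_simps)
    also have "\<dots> > 2*eps" using e0 e1 by (simp add: field_simps)
    finally show ?thesis .
  qed
  show ?thesis unfolding t using g by auto
qed

end


context params
begin

lemma Opsi_unit': "unitary (m*2*(1*2*1)) (Opsi (inst z))"
  using Opsi_unitary[of z] by (simp add: inst_def)

lemma low:
  assumes k: "k \<ge> 1"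
    and HU: "\<forall>t\<le>T. unitary (2*(m*1)*(m*2*(1*2*1))*k) (U t)"
    and HS: "\<forall>I\<in>inst ` {..m}. success_prob (2*(m*1)*(m*2*(1*2*1))*k) k U q out T
                     (Omu m 1 (\<lambda>_. 0) I) (Opsi I) (opt_val 1 m (1\<^sub>m 1) (A_of 1 2 1 I) (\<lambda>_. 1)) eps \<ge> 2/3"
  shows "real T \<ge> 1/20 * sqrt (real m) * B / eps"
proof -
  define dm where "dm = m*1"
  define dp where "dp = m*2*(1*2*1)"
  have Deq: "2*(m*1)*(m*2*(1*2*1))*k = 2*(dm*dp*k)" unfolding dm_def dp_def by (simp add: mult_ac)
  have HU': "\<forall>t\<le>T. unitary (2*(dm*dp*k)) (U t)" using HU unfolding Deq .
  have Om: "unitary dm (1\<^sub>m (m*1))" unfolding dm_def by (rule unitary_one)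
  have Op: "unitary dp (Opsi (inst z))" for z unfolding dp_def by (rule Opsi_unit')
  let ?s = "\<lambda>z. alg_state (2*(dm*dp*k)) k U q (1\<^sub>m (m*1)) (Opsi (inst z)) T"
  have sc: "?s z \<in> carrier_vec (2*(dm*dp*k))" "vnorm2 (?s z) \<le> 1" for z
    using alg_state_carrier[OF HU' Om Op] by auto
  have succ: "nS {i. \<bar>out i - opt_val 1 m (1\<^sub>m 1) (A_of 1 2 1 (inst z)) (\<lambda>_. 1)\<bar> \<le> eps} (?s z) \<ge> 2/3"
    if z: "z \<le> m" for z
  proof -
    have "inst z \<in> inst ` {..m}" using z by simp
    then have "success_prob (2*(dm*dp*k)) k U q out T (1\<^sub>m (m*1)) (Opsi (inst z))
       (opt_val 1 m (1\<^sub>m 1) (A_of 1 2 1 (inst z)) (\<lambda>_. 1)) eps \<ge> 2/3"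
      using HS unfolding Deq Omu_one by blast
    then show ?thesis using success_nS[OF sc(1)] by simp
  qed
  have dist: "nv (?s j - ?s m) \<ge> 1/5" if j: "j < m" for j
  proof (rule distinguish)
    show "dim_vec (?s m) = dim_vec (?s j)" using sc(1)[of m] sc(1)[of j] by simp
    show "vnorm2 (?s j) \<le> 1" by (rule sc(2))
    show "{i. \<bar>out i - 4\<bar> \<le> eps} \<inter> {i. \<bar>out i - 1 / (1/4 + eps/2)\<bar> \<le> eps} = {}"
      by (rule targets_disjoint)
    show "nS {i. \<bar>out i - 4\<bar> \<le> eps} (?s m) \<ge> 2/3" using succ[of m] unfolding opt_inst by simp
    show "nS {i. \<bar>out i - 1 / (1/4 + eps/2)\<bar> \<le> eps} (?s j) \<ge> 2/3" using succ[of j] j unfolding opt_inst by simp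
  qed
  have dpos: "4*eps/B > 0" using e0 B by simp
  have "real T \<ge> sqrt (real m) / (5 * (4*eps/B))"
  proof (rule lower_core[where h="\<lambda>p. p div 4" and Opf="\<lambda>j. Opsi (inst j)"])
    show "m > 0" using m2 by simp
    show "4*eps/B > 0" by (rule dpos)
    show "\<forall>t\<le>T. unitary (2*(dm*dp*k)) (U t)" by (rule HU')
    show "unitary dm (1\<^sub>m (m*1))" by (rule Om)
    show "unitary dp (Opsi (inst m))" by (rule Op)
    show "\<And>j. j < m \<Longrightarrow> unitary dp (Opsi (inst j))" by (rule Op)
    show "\<And>j. j < m \<Longrightarrow> bnd dp (Opsi (inst j) - Opsi (inst m)) (4*eps/B) {p. p div 4 = j}"
      unfolding dp_def by (rule diff_bnd(1))
    show "\<And>j. j < m \<Longrightarrow> bnd dp (adj (Opsi (inst j)) - adj (Opsi (inst m))) (4*eps/B) {p. p div 4 = j}"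
      unfolding dp_def by (rule diff_bnd(2))
    show "\<And>j. j < m \<Longrightarrow> nv (?s j - ?s m) \<ge> 1/5" by (rule dist)
  qed
  also have "sqrt (real m) / (5 * (4*eps/B)) = 1/20 * sqrt (real m) * B / eps"
    using e0 B by (simp add: field_simps)
  finally show ?thesis .
qed

lemma inj0: "inj_on (\<lambda>_::real\<times>real\<times>real. 0::nat) {(mup I j, mum I j, muI I j) | I j. I \<in> inst ` {..m} \<and> j < m}"
  unfolding inj_on_def by (auto simp: inst_def)

lemma C_facts: "hermitian 1 (1\<^sub>m 1)" "diagonal_mat (1\<^sub>m 1 :: complex mat)" "opnorm_le1 1 (1\<^sub>m 1)"
  unfolding hermitian_def adj_def diagonal_mat_def opnorm_le1_def by (auto intro!: eq_matI)

lemma inst_facts: "\<forall>I\<in>inst ` {..m}. valid_instance m 1 2 1 B I \<and>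
           (\<forall>j<m. diagonal_mat (A_of 1 2 1 I j) \<and> opnorm_le1 1 (A_of 1 2 1 I j)) \<and>
           (\<exists>X. primal_optimal 1 m (1\<^sub>m 1) (A_of 1 2 1 I) (\<lambda>_. 1) X \<and> Re (mtrace X) \<le> 4) \<and>
           (\<exists>y. dual_optimal 1 m (1\<^sub>m 1) (A_of 1 2 1 I) (\<lambda>_. 1) y \<and> (\<Sum>j<m. \<bar>y j\<bar>) \<le> 4)"
  using valid A_diag A_opnorm primal_inst dual_inst by blast

end


theorem corollary5p7:
  shows "\<exists>c::real. c > 0 \<and> (\<exists>R0 r0 :: real.
    \<forall>(eps::real) (m::nat) (B::real). 0 < eps \<and> eps \<le> 1/2 \<and> m \<ge> 2 \<and> B \<ge> 1 \<longrightarrow>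
     (\<exists>(n::nat) (a::nat) (e::nat) (L::nat) (enc :: real \<times> real \<times> real \<Rightarrow> nat)
        (C::complex mat) (b::nat \<Rightarrow> real) (F::qs_instance set).
        n \<ge> 1 \<and> a \<ge> 1 \<and> e \<ge> 1 \<and> L \<ge> 1 \<and> F \<noteq> {} \<and>
        inj_on enc {(mup I j, mum I j, muI I j) | I j. I \<in> F \<and> j < m} \<and>
        (\<forall>I\<in>F. \<forall>j<m. enc (mup I j, mum I j, muI I j) < L) \<and>
        hermitian n C \<and> diagonal_mat C \<and> opnorm_le1 n C \<and>
        (\<forall>I\<in>F. valid_instance m n a e B I \<and>
           (\<forall>j<m. diagonal_mat (A_of n a e I j) \<and> opnorm_le1 n (A_of n a e I j)) \<and>
           (\<exists>X. primal_optimal n m C (A_of n a e I) b X \<and> Re (mtrace X) \<le> R0) \<and>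
           (\<exists>y. dual_optimal n m C (A_of n a e I) b y \<and> (\<Sum>j<m. \<bar>y j\<bar>) \<le> r0)) \<and>
        (\<forall>(k::nat) (T::nat) (U::nat \<Rightarrow> complex mat) (q::nat \<Rightarrow> qkind) (out::nat \<Rightarrow> real).
           k \<ge> 1 \<and>
           (\<forall>t\<le>T. unitary (2 * (m * L) * (m * 2 * (n * a * e)) * k) (U t)) \<and>
           (\<forall>I\<in>F. success_prob (2 * (m * L) * (m * 2 * (n * a * e)) * k) k U q out T
                     (Omu m L enc I) (Opsi I) (opt_val n m C (A_of n a e I) b) eps \<ge> 2/3)
           \<longrightarrow> real T \<ge> c * sqrt (real m) * B / eps)))"
proof (rule exI[where x="1/20"], rule conjI)
  show "(0::real) < 1/20" by simp
  show "\<exists>R0 r0 :: real.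
    \<forall>(eps::real) (m::nat) (B::real). 0 < eps \<and> eps \<le> 1/2 \<and> m \<ge> 2 \<and> B \<ge> 1 \<longrightarrow>
     (\<exists>(n::nat) (a::nat) (e::nat) (L::nat) (enc :: real \<times> real \<times> real \<Rightarrow> nat)
        (C::complex mat) (b::nat \<Rightarrow> real) (F::qs_instance set).
        n \<ge> 1 \<and> a \<ge> 1 \<and> e \<ge> 1 \<and> L \<ge> 1 \<and> F \<noteq> {} \<and>
        inj_on enc {(mup I j, mum I j, muI I j) | I j. I \<in> F \<and> j < m} \<and>
        (\<forall>I\<in>F. \<forall>j<m. enc (mup I j, mum I j, muI I j) < L) \<and>
        hermitian n C \<and> diagonal_mat C \<and> opnorm_le1 n C \<and>
        (\<forall>I\<in>F. valid_instance m n a e B I \<and>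
           (\<forall>j<m. diagonal_mat (A_of n a e I j) \<and> opnorm_le1 n (A_of n a e I j)) \<and>
           (\<exists>X. primal_optimal n m C (A_of n a e I) b X \<and> Re (mtrace X) \<le> R0) \<and>
           (\<exists>y. dual_optimal n m C (A_of n a e I) b y \<and> (\<Sum>j<m. \<bar>y j\<bar>) \<le> r0)) \<and>
        (\<forall>(k::nat) (T::nat) (U::nat \<Rightarrow> complex mat) (q::nat \<Rightarrow> qkind) (out::nat \<Rightarrow> real).
           k \<ge> 1 \<and>
           (\<forall>t\<le>T. unitary (2 * (m * L) * (m * 2 * (n * a * e)) * k) (U t)) \<and>
           (\<forall>I\<in>F. success_prob (2 * (m * L) * (m * 2 * (n * a * e)) * k) k U q out T
                     (Omu m L enc I) (Opsi I) (opt_val n m C (A_of n a e I) b) eps \<ge> 2/3)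
           \<longrightarrow> real T \<ge> 1/20 * sqrt (real m) * B / eps))"
  proof (rule exI[where x="4::real"], rule exI[where x="4::real"], intro allI impI)
    fix eps :: real and m :: nat and B :: real
    assume H: "0 < eps \<and> eps \<le> 1/2 \<and> m \<ge> 2 \<and> B \<ge> 1"
    interpret params B eps m using H by unfold_locales auto
    have low': "\<forall>(k::nat) (T::nat) (U::nat \<Rightarrow> complex mat) (q::nat \<Rightarrow> qkind) (out::nat \<Rightarrow> real).
           k \<ge> 1 \<and>
           (\<forall>t\<le>T. unitary (2 * (m * 1) * (m * 2 * (1 * 2 * 1)) * k) (U t)) \<and>
           (\<forall>I\<in>inst ` {..m}. success_prob (2 * (m * 1) * (m * 2 * (1 * 2 * 1)) * k) k U q out T
                     (Omu m 1 (\<lambda>_. 0) I) (Opsi I) (opt_val 1 m (1\<^sub>m 1) (A_of 1 2 1 I) (\<lambda>_. 1)) eps \<ge> 2/3)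
           \<longrightarrow> real T \<ge> 1/20 * sqrt (real m) * B / eps"
      using low by blast
    show "\<exists>(n::nat) (a::nat) (e::nat) (L::nat) (enc :: real \<times> real \<times> real \<Rightarrow> nat)
        (C::complex mat) (b::nat \<Rightarrow> real) (F::qs_instance set).
        n \<ge> 1 \<and> a \<ge> 1 \<and> e \<ge> 1 \<and> L \<ge> 1 \<and> F \<noteq> {} \<and>
        inj_on enc {(mup I j, mum I j, muI I j) | I j. I \<in> F \<and> j < m} \<and>
        (\<forall>I\<in>F. \<forall>j<m. enc (mup I j, mum I j, muI I j) < L) \<and>
        hermitian n C \<and> diagonal_mat C \<and> opnorm_le1 n C \<and>
        (\<forall>I\<in>F. valid_instance m n a e B I \<and>
           (\<forall>j<m. diagonal_mat (A_of n a e I j) \<and> opnorm_le1 n (A_of n a e I j)) \<and>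
           (\<exists>X. primal_optimal n m C (A_of n a e I) b X \<and> Re (mtrace X) \<le> 4) \<and>
           (\<exists>y. dual_optimal n m C (A_of n a e I) b y \<and> (\<Sum>j<m. \<bar>y j\<bar>) \<le> 4)) \<and>
        (\<forall>(k::nat) (T::nat) (U::nat \<Rightarrow> complex mat) (q::nat \<Rightarrow> qkind) (out::nat \<Rightarrow> real).
           k \<ge> 1 \<and>
           (\<forall>t\<le>T. unitary (2 * (m * L) * (m * 2 * (n * a * e)) * k) (U t)) \<and>
           (\<forall>I\<in>F. success_prob (2 * (m * L) * (m * 2 * (n * a * e)) * k) k U q out T
                     (Omu m L enc I) (Opsi I) (opt_val n m C (A_of n a e I) b) eps \<ge> 2/3)
           \<longrightarrow> real T \<ge> 1/20 * sqrt (real m) * B / eps)"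
      apply (rule exI[where x=1], rule exI[where x=2], rule exI[where x=1], rule exI[where x=1])
      apply (rule exI[where x="\<lambda>_. 0"], rule exI[where x="1\<^sub>m 1"], rule exI[where x="\<lambda>_. 1"],
             rule exI[where x="inst ` {..m}"])
      apply (intro conjI)
                 apply simp
                apply simp
               apply simp
              apply simp
             apply simp
            apply (rule inj0)
           apply simp
          apply (rule C_facts(1))
         apply (rule C_facts(2))
        apply (rule C_facts(3))
       apply (rule inst_facts)
      apply (rule low')
      done
  qed
qed

end
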